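(* Let $D^l$ and $D^r$ be two upright long knot diagrams (possibly with null vertices) which coincide outside a disk and differ inside it by the following R3b move. Inside the disk there are three upward-pointing strands, with edge labels (in order along the knot) $i, i^+, i^{++}$ on the first, $j,j^+,j^{++}$ on the second and $k,k^+,k^{++}$ on the third, the edges $i^+,j^+,k^+$ lying entirely inside the disk. In $D^l$ the crossings inside the disk are $(1,j,k)$, $(1,i,k^+)$, $(1,i^+,j^+)$; in $D^r$ they are $(1,i,j)$, $(1,i^+,k)$, $(1,j^+,k^+)$. All other crossings, and all rotation numbers, are the same in both diagrams, the inner edges $i^+,j^+,k^+$ having rotation number $0$. Then $\theta_0(D^l)=\theta_0(D^r)$.
   Context: An upright long knot diagram is a planar diagram of a long oriented knot such that at every crossing both strands point upward and the knot points upward at its beginning and end. It may contain null vertices (marked points on the knot, away from crossings, where the tangent points upward, whose only role is to cut edges). Edges are the arcs obtained by cutting the knot at all crossings (both strands) and null vertices; they carry distinct labels, $\ell^+$ denotes the label of the edge following $\ell$. Each edge $k$ has a rotation number $\varphi_k$: the signed number of points where its tangent is horizontal and heading right, cups $+1$, caps $-1$. A crossing is $c=(s,i,j)$: sign $s=\pm1$, incoming over-edge $i$, incoming under-edge $j$ (outgoing edges $i^+$, $j^+$); $X$ is the set of crossings. A null vertex with incoming edge $j$ and outgoing edge $k$ is recorded as $(j,k)$. Let $A=I+\sum_cA_c+\sum_{\mathrm{nv}}A_{\mathrm{nv}}$ where $A_c$ is zero except for entries $-T^s$ at $(i,i^+)$, $T^s-1$ at $(i,j^+)$, $-1$ at $(j,j^+)$,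 and $A_{\mathrm{nv}}$ is zero except for $-1$ at $(j,k)$. Let $G=(g_{\alpha\beta})=A^{-1}$ over $\mathbb{Q}(T)$. Let $T_3=T_1T_2$ and let $g_{\nu\alpha\beta}$ be $g_{\alpha\beta}$ with $T\to T_\nu$ ($\nu=1,2,3$). For crossings $c=(s,i,j)$, $c_0=(s_0,i_0,j_0)$, $c_1=(s_1,i_1,j_1)$ and an edge $k$: $$F_1(c)= s\Big[\tfrac12 - g_{3ii} + T_2^s g_{1ii}g_{2ji} - T_2^s g_{3jj}g_{2ji} - (T_2^s-1)g_{3ii}g_{2ji} + (T_3^s-1)g_{2ji}g_{3ji} - g_{1ii}g_{2jj} + 2g_{3ii}g_{2jj} + g_{1ii}g_{3jj} - g_{2ii}g_{3jj}\Big]$$ $$\quad + \frac{s}{T_2^s-1}\Big[(T_1^s-1)T_2^s\big(g_{3jj}g_{1ji}-g_{2jj}g_{1ji}+T_2^sg_{1ji}g_{2ji}\big) + (T_3^s-1)g_{3ji}\big(1-T_2^sg_{1ii}+g_{2ij}+(T_2^s-2)g_{2jj}-(T_1^s-1)(T_2^s+1)g_{1ji}\big)\Big],$$ $$F_2(c_0,c_1)=\frac{s_1(T_1^{s_0}-1)(T_3^{s_1}-1)g_{1j_1i_0}g_{3j_0i_1}}{T_2^{s_1}-1}\Big(T_2^{s_0}g_{2i_1i_0}+g_{2j_1j_0}-T_2^{s_0}g_{2j_1i_0}-g_{2i_1j_0}\Big),\qquad F_3(k)=(g_{3kk}-\tfrac12)\varphi_k,$$ and $\theta_0(D)=\sum_{c\in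 X}F_1(c)+\sum_{c_0,c_1\in X}F_2(c_0,c_1)+\sum_{\text{edges }k}F_3(k)$ (ordered pairs, including $c_0=c_1$; null vertices contribute no terms of their own). *)

theory Defs
  imports Complex_Main
begin

text \<open>
  A diagram is described by the list  es  of its (distinct) edge labels in order along
  the knot, a set  X  of crossings  (s,i,j)  (sign s, incoming over-edge i, incoming
  under-edge j), a set  N  of null vertices  (j,k), and rotation numbers  phi.
  The edge following  l  along the knot is  nxt es l  (the paper's  l^+).
\<close>

type_synonym 'e crossing = "int \<times> 'e \<times> 'e"

definition nxt :: "'e list \<Rightarrow> 'e \<Rightarrow> 'e" where
  "nxt es l = es ! Suc (THE n. n < length es \<and> es ! n = l)"

definition long_knot_diagram :: "'e list \<Rightarrow> 'e crossing set \<Rightarrow> ('e \<times> 'e) set \<Rightarrow> bool" where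
  "long_knot_diagram es X N \<longleftrightarrow>
     es \<noteq> [] \<and> distinct es \<and> finite X \<and> finite N \<and>
     (\<forall>(s,i,j)\<in>X. (s = 1 \<or> s = -1) \<and> i \<in> set es \<and> j \<in> set es) \<and>
     (\<forall>(j,k)\<in>N. j \<in> set es \<and> k = nxt es j) \<and>
     (\<forall>e\<in>set es.
        card {c\<in>X. fst (snd c) = e} + card {c\<in>X. snd (snd c) = e} + card {v\<in>N. fst v = e}
        = (if e = last es then 0 else 1))"

definition A_cross :: "'e list \<Rightarrow> 'a::field \<Rightarrow> 'e crossing \<Rightarrow> 'e \<Rightarrow> 'e \<Rightarrow> 'a" where
  "A_cross es T c a b = (case c of (s,i,j) \<Rightarrow>
      (if a = i \<and> b = nxt es i then - (T powi s) else 0)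
    + (if a = i \<and> b = nxt es j then T powi s - 1 else 0)
    + (if a = j \<and> b = nxt es j then -1 else 0))"

definition A_nv :: "'e \<times> 'e \<Rightarrow> 'e \<Rightarrow> 'e \<Rightarrow> 'a::field" where
  "A_nv v a b = (if a = fst v \<and> b = snd v then -1 else 0)"

definition Amat :: "'e list \<Rightarrow> 'e crossing set \<Rightarrow> ('e \<times> 'e) set \<Rightarrow> 'a::field \<Rightarrow> 'e \<Rightarrow> 'e \<Rightarrow> 'a" where
  "Amat es X N T a b =
     (if a = b then 1 else 0) + (\<Sum>c\<in>X. A_cross es T c a b) + (\<Sum>v\<in>N. A_nv v a b)"

definition is_inverse_on :: "'e set \<Rightarrow> ('e \<Rightarrow> 'e \<Rightarrow> 'a::field) \<Rightarrow> ('e \<Rightarrow> 'e \<Rightarrow> 'a) \<Rightarrow> bool" where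
  "is_inverse_on E M G \<longleftrightarrow>
     (\<forall>a\<in>E. \<forall>b\<in>E. (\<Sum>c\<in>E. M a c * G c b) = (if a = b then 1 else 0)) \<and>
     (\<forall>a\<in>E. \<forall>b\<in>E. (\<Sum>c\<in>E. G a c * M c b) = (if a = b then 1 else 0))"

definition invertible_on :: "'e set \<Rightarrow> ('e \<Rightarrow> 'e \<Rightarrow> 'a::field) \<Rightarrow> bool" where
  "invertible_on E M \<longleftrightarrow> (\<exists>G. is_inverse_on E M G)"

definition inv_on :: "'e set \<Rightarrow> ('e \<Rightarrow> 'e \<Rightarrow> 'a::field) \<Rightarrow> 'e \<Rightarrow> 'e \<Rightarrow> 'a" where
  "inv_on E M = (SOME G. is_inverse_on E M G)"

definition Gmat :: "'e list \<Rightarrow> 'e crossing set \<Rightarrow> ('e \<times> 'e) set \<Rightarrow> 'a::field \<Rightarrow> 'e \<Rightarrow> 'e \<Rightarrow> 'a" where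
  "Gmat es X N T = inv_on (set es) (Amat es X N T)"

definition F1 :: "('e \<Rightarrow> 'e \<Rightarrow> 'a::field) \<Rightarrow> ('e \<Rightarrow> 'e \<Rightarrow> 'a) \<Rightarrow> ('e \<Rightarrow> 'e \<Rightarrow> 'a)
                  \<Rightarrow> 'a \<Rightarrow> 'a \<Rightarrow> 'e crossing \<Rightarrow> 'a" where
  "F1 g1 g2 g3 T1 T2 c = (case c of (s,i,j) \<Rightarrow>
     let T3 = T1 * T2; S1 = T1 powi s; S2 = T2 powi s; S3 = T3 powi s in
     of_int s * (1/2 - g3 i i + S2 * g1 i i * g2 j i - S2 * g3 j j * g2 j i
        - (S2 - 1) * g3 i i * g2 j i + (S3 - 1) * g2 j i * g3 j i - g1 i i * g2 j j
        + 2 * g3 i i * g2 j j + g1 i i * g3 j j - g2 i i * g3 j j)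
     + of_int s / (S2 - 1) *
       ((S1 - 1) * S2 * (g3 j j * g1 j i - g2 j j * g1 j i + S2 * g1 j i * g2 j i)
        + (S3 - 1) * g3 j i * (1 - S2 * g1 i i + g2 i j + (S2 - 2) * g2 j j
                                - (S1 - 1) * (S2 + 1) * g1 j i)))"

definition F2 :: "('e \<Rightarrow> 'e \<Rightarrow> 'a::field) \<Rightarrow> ('e \<Rightarrow> 'e \<Rightarrow> 'a) \<Rightarrow> ('e \<Rightarrow> 'e \<Rightarrow> 'a)
                  \<Rightarrow> 'a \<Rightarrow> 'a \<Rightarrow> 'e crossing \<Rightarrow> 'e crossing \<Rightarrow> 'a" where
  "F2 g1 g2 g3 T1 T2 c0 c1 = (case c0 of (s0,i0,j0) \<Rightarrow> case c1 of (s1,i1,j1) \<Rightarrow>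
     let T3 = T1 * T2 in
     of_int s1 * (T1 powi s0 - 1) * (T3 powi s1 - 1) * g1 j1 i0 * g3 j0 i1 / (T2 powi s1 - 1)
     * (T2 powi s0 * g2 i1 i0 + g2 j1 j0 - T2 powi s0 * g2 j1 i0 - g2 i1 j0))"

definition F3 :: "('e \<Rightarrow> 'e \<Rightarrow> 'a::field) \<Rightarrow> ('e \<Rightarrow> int) \<Rightarrow> 'e \<Rightarrow> 'a" where
  "F3 g3 phi k = (g3 k k - 1/2) * of_int (phi k)"

definition theta0 :: "'e list \<Rightarrow> 'e crossing set \<Rightarrow> ('e \<times> 'e) set \<Rightarrow> ('e \<Rightarrow> int)
                       \<Rightarrow> 'a::field \<Rightarrow> 'a \<Rightarrow> 'a" where
  "theta0 es X N phi T1 T2 =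
     (let g1 = Gmat es X N T1; g2 = Gmat es X N T2; g3 = Gmat es X N (T1 * T2) in
      (\<Sum>c\<in>X. F1 g1 g2 g3 T1 T2 c)
      + (\<Sum>c0\<in>X. \<Sum>c1\<in>X. F2 g1 g2 g3 T1 T2 c0 c1)
      + (\<Sum>k\<in>set es. F3 g3 phi k))"

end

theory Submission
  imports Defs
begin


lemma the_idx:
  assumes "distinct es" "n < length es"
  shows "(THE m. m < length es \<and> es ! m = es ! n) = n"
  using assms by (auto intro!: the_equality simp: nth_eq_iff_index_eq)

lemma nxt_nth: "distinct es \<Longrightarrow> n < length es \<Longrightarrow> nxt es (es ! n) = es ! Suc n"
  by (simp add: nxt_def the_idx)

lemma suc_lt:
  assumes "n < length es" "es ! n \<noteq> last es"
  shows "Suc n < length es"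
proof (rule ccontr)
  assume "\<not> ?thesis"
  then have "n = length es - 1" using assms by auto
  moreover have "es \<noteq> []" using assms by auto
  ultimately have "es ! n = last es" by (simp add: last_conv_nth)
  then show False using assms by simp
qed

lemma nxt_in:
  assumes "distinct es" "e \<in> set es" "e \<noteq> last es"
  shows "nxt es e \<in> set es"
proof -
  obtain n where n: "n < length es" "es ! n = e" using assms(2) by (auto simp: in_set_conv_nth)
  have "Suc n < length es" using suc_lt[of n es] n assms by simp
  then show ?thesis using n assms by (auto simp: nxt_nth)
qed

lemma nxt_inj:
  assumes "distinct es" "a \<in> set es" "a \<noteq> last es" "b \<in> set es" "b \<noteq> last es"
    and "nxt es a = nxt es b"
  shows "a = b"
proof -
  obtain n where n: "n < length es" "es ! n = a" using assms(2) by (auto simp: in_set_conv_nth)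
  obtain m where m: "m < length es" "es ! m = b" using assms(4) by (auto simp: in_set_conv_nth)
  have "Suc n < length es" using suc_lt[of n es] n assms by simp
  moreover have "Suc m < length es" using suc_lt[of m es] m assms by simp
  moreover have "nxt es a = es ! Suc n" using nxt_nth[OF assms(1) n(1)] n(2) by simp
  moreover have "nxt es b = es ! Suc m" using nxt_nth[OF assms(1) m(1)] m(2) by simp
  ultimately have "es ! Suc n = es ! Suc m" using assms(6) by simp
  then have "Suc n = Suc m" using \<open>Suc n < length es\<close> \<open>Suc m < length es\<close> assms(1)
    by (simp add: nth_eq_iff_index_eq)
  then show ?thesis using n m by simp
qed

lemma nxt_neq:
  assumes "distinct es" "a \<in> set es" "a \<noteq> last es"
  shows "nxt es a \<noteq> a"
proof -
  obtain n where n: "n < length es" "es ! n = a" using assms(2) by (auto simp: in_set_conv_nth)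
  have "Suc n < length es" using suc_lt[of n es] n assms by simp
  moreover have "nxt es a = es ! Suc n" using nxt_nth[OF assms(1) n(1)] n(2) by simp
  moreover have "es ! Suc n \<noteq> es ! n" using \<open>Suc n < length es\<close> n(1) assms(1) by (simp add: nth_eq_iff_index_eq)
  ultimately show ?thesis using n by simp
qed

section \<open>event uniqueness\<close>

lemma wf_basic:
  assumes "long_knot_diagram es Y N"
  shows "es \<noteq> []" "distinct es" "finite Y" "finite N"
    "\<And>s a b. (s,a,b) \<in> Y \<Longrightarrow> a \<in> set es \<and> b \<in> set es \<and> (s = 1 \<or> s = -1)"
    "\<And>a b. (a,b) \<in> N \<Longrightarrow> a \<in> set es \<and> b = nxt es a"
  using assms unfolding long_knot_diagram_def by auto

lemma wf_count:
  assumes "long_knot_diagram es Y N" "e \<in> set es"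
  shows "card {c\<in>Y. fst (snd c) = e} + card {c\<in>Y. snd (snd c) = e} + card {v\<in>N. fst v = e}
        = (if e = last es then 0 else 1)"
  using assms unfolding long_knot_diagram_def by auto

lemma card3_lemma:
  assumes "finite A" "finite B" "finite C" "card A + card B + card C \<le> 1"
  shows "x \<in> A \<Longrightarrow> y \<in> A \<Longrightarrow> x = y" "x \<in> A \<Longrightarrow> B = {}" "x \<in> A \<Longrightarrow> C = {}"
    "u \<in> B \<Longrightarrow> w \<in> B \<Longrightarrow> u = w" "u \<in> B \<Longrightarrow> C = {}"
proof -
  have cA: "card A \<le> 1" and cB: "card B \<le> 1" using assms(4) by auto
  show "x \<in> A \<Longrightarrow> y \<in> A \<Longrightarrow> x = y" using cA assms(1) by (auto simp: card_le_Suc0_iff_eq)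
  show "u \<in> B \<Longrightarrow> w \<in> B \<Longrightarrow> u = w" using cB assms(2) by (auto simp: card_le_Suc0_iff_eq)
  show "x \<in> A \<Longrightarrow> B = {}"
  proof (rule ccontr)
    assume "x \<in> A" "B \<noteq> {}"
    then have "card A \<ge> 1" "card B \<ge> 1" using assms(1,2) by (auto simp: Suc_le_eq card_gt_0_iff)
    then show False using assms(4) by simp
  qed
  show "x \<in> A \<Longrightarrow> C = {}"
  proof (rule ccontr)
    assume "x \<in> A" "C \<noteq> {}"
    then have "card A \<ge> 1" "card C \<ge> 1" using assms(1,3) by (auto simp: Suc_le_eq card_gt_0_iff)
    then show False using assms(4) by simp
  qed
  show "u \<in> B \<Longrightarrow> C = {}"
  proof (rule ccontr)
    assume "u \<in> B" "C \<noteq> {}"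
    then have "card B \<ge> 1" "card C \<ge> 1" using assms(2,3) by (auto simp: Suc_le_eq card_gt_0_iff)
    then show False using assms(4) by simp
  qed
qed

lemma wf_card_le:
  assumes "long_knot_diagram es Y N" "e \<in> set es"
  shows "card {c\<in>Y. fst (snd c) = e} + card {c\<in>Y. snd (snd c) = e} + card {v\<in>N. fst v = e} \<le> 1"
  using wf_count[OF assms] by simp

lemma wf_nonlast:
  assumes "long_knot_diagram es Y N" "e \<in> set es"
    and "(\<exists>x\<in>Y. fst (snd x) = e) \<or> (\<exists>x\<in>Y. snd (snd x) = e) \<or> (\<exists>v\<in>N. fst v = e)"
  shows "e \<noteq> last es"
proof
  assume l: "e = last es"
  have f: "finite Y" "finite N" using assms(1) by (auto simp: long_knot_diagram_def)
  have "card {c\<in>Y. fst (snd c) = e} + card {c\<in>Y. snd (snd c) = e} + card {v\<in>N. fst v = e} = 0"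
    using wf_count[OF assms(1,2)] l by simp
  then have "{c\<in>Y. fst (snd c) = e} = {}" "{c\<in>Y. snd (snd c) = e} = {}" "{v\<in>N. fst v = e} = {}"
    using f by auto
  then show False using assms(3) by blast
qed

lemma ev_sets:
  assumes wf: "long_knot_diagram es Y N" and a: "a \<in> set es"
  defines "A \<equiv> {c\<in>Y. fst (snd c) = a}" and "B \<equiv> {c\<in>Y. snd (snd c) = a}" and "C \<equiv> {v\<in>N. fst v = a}"
  shows "finite A" "finite B" "finite C" "card A + card B + card C \<le> 1"
proof -
  have f: "finite Y" "finite N" using wf_basic[OF wf] by auto
  show "finite A" "finite B" "finite C" using f unfolding A_def B_def C_def by auto
  show "card A + card B + card C \<le> 1" unfolding A_def B_def C_def using wf_card_le[OF wf a] .
qed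

lemma over_unique:
  assumes wf: "long_knot_diagram es Y N" and x: "(s,a,b) \<in> Y"
  shows "\<And>y. y \<in> Y \<Longrightarrow> fst (snd y) = a \<Longrightarrow> y = (s,a,b)"
    "\<And>y. y \<in> Y \<Longrightarrow> snd (snd y) \<noteq> a"
    "\<And>v. v \<in> N \<Longrightarrow> fst v \<noteq> a"
    "a \<noteq> last es" "a \<in> set es"
proof -
  have a: "a \<in> set es" using wf_basic(5)[OF wf x] by simp
  note c = card3_lemma[OF ev_sets[OF wf a]]
  have xa: "(s,a,b) \<in> {c\<in>Y. fst (snd c) = a}" using x by simp
  show "\<And>y. y \<in> Y \<Longrightarrow> fst (snd y) = a \<Longrightarrow> y = (s,a,b)"
  proof -
    fix y assume "y \<in> Y" "fst (snd y) = a"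
    then have "y \<in> {c\<in>Y. fst (snd c) = a}" by simp
    then show "y = (s,a,b)" using c(1)[OF _ xa] by blast
  qed
  show "\<And>y. y \<in> Y \<Longrightarrow> snd (snd y) \<noteq> a" using c(2)[OF xa] by blast
  show "\<And>v. v \<in> N \<Longrightarrow> fst v \<noteq> a" using c(3)[OF xa] by blast
  show "a \<noteq> last es" using wf_nonlast[OF wf a] x by force
  show "a \<in> set es" by (rule a)
qed

lemma under_unique:
  assumes wf: "long_knot_diagram es Y N" and x: "(s,b,a) \<in> Y"
  shows "\<And>y. y \<in> Y \<Longrightarrow> snd (snd y) = a \<Longrightarrow> y = (s,b,a)"
    "\<And>y. y \<in> Y \<Longrightarrow> fst (snd y) \<noteq> a"
    "\<And>v. v \<in> N \<Longrightarrow> fst v \<noteq> a"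
    "a \<noteq> last es" "a \<in> set es"
proof -
  have a: "a \<in> set es" using wf_basic(5)[OF wf x] by simp
  note c = card3_lemma[OF ev_sets[OF wf a]]
  have xa: "(s,b,a) \<in> {c\<in>Y. snd (snd c) = a}" using x by simp
  show "\<And>y. y \<in> Y \<Longrightarrow> snd (snd y) = a \<Longrightarrow> y = (s,b,a)"
  proof -
    fix y assume "y \<in> Y" "snd (snd y) = a"
    then have "y \<in> {c\<in>Y. snd (snd c) = a}" by simp
    then show "y = (s,b,a)" using c(4)[OF _ xa] by blast
  qed
  show "\<And>y. y \<in> Y \<Longrightarrow> fst (snd y) \<noteq> a"
  proof
    fix y assume y: "y \<in> Y" "fst (snd y) = a"
    then have "y \<in> {c\<in>Y. fst (snd c) = a}" by simp
    then have "{c\<in>Y. snd (snd c) = a} = {}" using c(2) by blast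
    then show False using xa by blast
  qed
  show "\<And>v. v \<in> N \<Longrightarrow> fst v \<noteq> a" using c(5)[OF xa] by blast
  show "a \<noteq> last es" using wf_nonlast[OF wf a] x by force
  show "a \<in> set es" by (rule a)
qed

lemma in_edges_nonlast:
  assumes wf: "long_knot_diagram es Y N" and x: "x \<in> Y"
  shows "fst (snd x) \<noteq> last es" "snd (snd x) \<noteq> last es" "fst (snd x) \<in> set es" "snd (snd x) \<in> set es"
  using over_unique(4,5)[OF wf, of "fst x" "fst (snd x)" "snd (snd x)"]
    under_unique(4,5)[OF wf, of "fst x" "fst (snd x)" "snd (snd x)"] x by auto

lemma nv_facts:
  assumes wf: "long_knot_diagram es Y N" and v: "v \<in> N"
  shows "fst v \<in> set es" "fst v \<noteq> last es" "snd v = nxt es (fst v)"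
proof -
  show a: "fst v \<in> set es" using wf_basic(6)[OF wf, of "fst v" "snd v"] v by simp
  show "snd v = nxt es (fst v)" using wf_basic(6)[OF wf, of "fst v" "snd v"] v by simp
  show "fst v \<noteq> last es" using wf_nonlast[OF wf a] v by blast
qed

section \<open>row and column sums\<close>

definition rowc :: "'e list \<Rightarrow> 'a::field \<Rightarrow> 'e crossing \<Rightarrow> 'e \<Rightarrow> ('e \<Rightarrow> 'a) \<Rightarrow> 'a" where
  "rowc es T x a y = (case x of (s,p,q) \<Rightarrow>
     (if a = p then - (T powi s) * y (nxt es p) + (T powi s - 1) * y (nxt es q) else 0)
     + (if a = q then - y (nxt es q) else 0))"

definition colc :: "'e list \<Rightarrow> 'a::field \<Rightarrow> 'e crossing \<Rightarrow> 'e \<Rightarrow> ('e \<Rightarrow> 'a) \<Rightarrow> 'a" where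
  "colc es T x b y = (case x of (s,p,q) \<Rightarrow>
     (if b = nxt es p then - (T powi s) * y p else 0)
     + (if b = nxt es q then (T powi s - 1) * y p - y q else 0))"

lemma sum_ite_eq:
  fixes u :: "'a::comm_ring_1"
  assumes "finite E" "z \<in> E"
  shows "(\<Sum>c\<in>E. (if P \<and> c = z then u else 0) * y c) = (if P then u * y z else 0)"
proof -
  have "(\<Sum>c\<in>E. (if P \<and> c = z then u else 0) * y c) = (\<Sum>c\<in>E. if c = z then (if P then u * y c else 0) else 0)"
    by (rule sum.cong) auto
  also have "\<dots> = (if P then u * y z else 0)" using assms by simp
  finally show ?thesis .
qed

lemma sum_ite_eq2:
  fixes u :: "'a::comm_ring_1"
  assumes "finite E" "z \<in> E"
  shows "(\<Sum>c\<in>E. y c * (if c = z \<and> P then u else 0)) = (if P then y z * u else 0)"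
proof -
  have "(\<Sum>c\<in>E. y c * (if c = z \<and> P then u else 0)) = (\<Sum>c\<in>E. if c = z then (if P then y c * u else 0) else 0)"
    by (rule sum.cong) auto
  also have "\<dots> = (if P then y z * u else 0)" using assms by simp
  finally show ?thesis .
qed

lemma row_sum:
  assumes wf: "long_knot_diagram es Y N" and a: "a \<in> set es"
  shows "(\<Sum>c\<in>set es. Amat es Y N T a c * y c)
       = y a + (\<Sum>x\<in>Y. rowc es T x a y) + (\<Sum>v\<in>N. if fst v = a then - y (snd v) else 0)"
proof -
  have f: "finite Y" "finite N" "finite (set es)" "distinct es" using wf_basic[OF wf] by auto
  have 1: "(\<Sum>c\<in>set es. (if a = c then 1 else 0) * y c) = y a"
  proof -
    have "(\<Sum>c\<in>set es. (if a = c then 1 else 0) * y c) = (\<Sum>c\<in>set es. if c = a then y c else 0)"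
      by (rule sum.cong) auto
    then show ?thesis using a by simp
  qed
  have 2: "(\<Sum>c\<in>set es. A_cross es T x a c * y c) = rowc es T x a y" if x: "x \<in> Y" for x
  proof -
    obtain s p q where xs: "x = (s,p,q)" by (cases x) auto
    have pq: "nxt es p \<in> set es" "nxt es q \<in> set es"
      using in_edges_nonlast[OF wf x] nxt_in[OF f(4)] xs by auto
    have "(\<Sum>c\<in>set es. A_cross es T x a c * y c) =
        (\<Sum>c\<in>set es. (if a = p \<and> c = nxt es p then - (T powi s) else 0) * y c)
      + (\<Sum>c\<in>set es. (if a = p \<and> c = nxt es q then T powi s - 1 else 0) * y c)
      + (\<Sum>c\<in>set es. (if a = q \<and> c = nxt es q then -1 else 0) * y c)"
      unfolding xs A_cross_def by (simp add: sum.distrib ring_distribs)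
    also have "\<dots> = rowc es T x a y"
      unfolding sum_ite_eq[OF f(3) pq(1)] sum_ite_eq[OF f(3) pq(2)] rowc_def xs by simp
    finally show ?thesis .
  qed
  have 3: "(\<Sum>c\<in>set es. A_nv v a c * y c) = (if fst v = a then - y (snd v) else 0)" if v: "v \<in> N" for v
  proof -
    have sv: "snd v \<in> set es" using nv_facts[OF wf v] nxt_in[OF f(4)] by auto
    have "(\<Sum>c\<in>set es. A_nv v a c * y c) = (\<Sum>c\<in>set es. (if a = fst v \<and> c = snd v then -1 else 0) * y c)"
      unfolding A_nv_def by simp
    also have "\<dots> = (if fst v = a then - y (snd v) else 0)" unfolding sum_ite_eq[OF f(3) sv] by auto
    finally show ?thesis .
  qed
  have "(\<Sum>c\<in>set es. Amat es Y N T a c * y c)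
      = (\<Sum>c\<in>set es. (if a = c then 1 else 0) * y c) + (\<Sum>c\<in>set es. \<Sum>x\<in>Y. A_cross es T x a c * y c)
        + (\<Sum>c\<in>set es. \<Sum>v\<in>N. A_nv v a c * y c)"
    unfolding Amat_def by (simp add: sum.distrib ring_distribs sum_distrib_right)
  also have "(\<Sum>c\<in>set es. \<Sum>x\<in>Y. A_cross es T x a c * y c) = (\<Sum>x\<in>Y. \<Sum>c\<in>set es. A_cross es T x a c * y c)"
    by (rule sum.swap)
  also have "\<dots> = (\<Sum>x\<in>Y. rowc es T x a y)" using 2 by (rule sum.cong[OF refl])
  also have "(\<Sum>c\<in>set es. \<Sum>v\<in>N. A_nv v a c * y c) = (\<Sum>v\<in>N. \<Sum>c\<in>set es. A_nv v a c * y c)"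
    by (rule sum.swap)
  also have "\<dots> = (\<Sum>v\<in>N. if fst v = a then - y (snd v) else 0)" using 3 by (rule sum.cong[OF refl])
  finally show ?thesis using 1 by simp
qed

lemma col_sum:
  assumes wf: "long_knot_diagram es Y N" and b: "b \<in> set es"
  shows "(\<Sum>c\<in>set es. y c * Amat es Y N T c b)
       = y b + (\<Sum>x\<in>Y. colc es T x b y) + (\<Sum>v\<in>N. if snd v = b then - y (fst v) else 0)"
proof -
  have f: "finite Y" "finite N" "finite (set es)" "distinct es" using wf_basic[OF wf] by auto
  have 1: "(\<Sum>c\<in>set es. y c * (if c = b then 1 else 0)) = y b"
  proof -
    have "(\<Sum>c\<in>set es. y c * (if c = b then 1 else 0)) = (\<Sum>c\<in>set es. if c = b then y c else 0)"
      by (rule sum.cong) auto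
    then show ?thesis using b by simp
  qed
  have 2: "(\<Sum>c\<in>set es. y c * A_cross es T x c b) = colc es T x b y" if x: "x \<in> Y" for x
  proof -
    obtain s p q where xs: "x = (s,p,q)" by (cases x) auto
    have pq: "p \<in> set es" "q \<in> set es"
      using in_edges_nonlast[OF wf x] xs by auto
    have "(\<Sum>c\<in>set es. y c * A_cross es T x c b) =
        (\<Sum>c\<in>set es. y c * (if c = p \<and> b = nxt es p then - (T powi s) else 0))
      + (\<Sum>c\<in>set es. y c * (if c = p \<and> b = nxt es q then T powi s - 1 else 0))
      + (\<Sum>c\<in>set es. y c * (if c = q \<and> b = nxt es q then -1 else 0))"
      unfolding xs A_cross_def by (simp add: sum.distrib ring_distribs)
    also have "\<dots> = colc es T x b y"
      unfolding sum_ite_eq2[OF f(3) pq(1)] sum_ite_eq2[OF f(3) pq(2)] colc_def xs by (simp add: algebra_simps)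
    finally show ?thesis .
  qed
  have 3: "(\<Sum>c\<in>set es. y c * A_nv v c b) = (if snd v = b then - y (fst v) else 0)" if v: "v \<in> N" for v
  proof -
    have sv: "fst v \<in> set es" using nv_facts[OF wf v] by auto
    have "(\<Sum>c\<in>set es. y c * A_nv v c b) = (\<Sum>c\<in>set es. y c * (if c = fst v \<and> b = snd v then -1 else 0))"
      unfolding A_nv_def by (simp add: conj_commute)
    also have "\<dots> = (if snd v = b then - y (fst v) else 0)" unfolding sum_ite_eq2[OF f(3) sv] by auto
    finally show ?thesis .
  qed
  have "(\<Sum>c\<in>set es. y c * Amat es Y N T c b)
      = (\<Sum>c\<in>set es. y c * (if c = b then 1 else 0)) + (\<Sum>c\<in>set es. \<Sum>x\<in>Y. y c * A_cross es T x c b)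
        + (\<Sum>c\<in>set es. \<Sum>v\<in>N. y c * A_nv v c b)"
    unfolding Amat_def by (simp add: sum.distrib ring_distribs sum_distrib_left)
  also have "(\<Sum>c\<in>set es. \<Sum>x\<in>Y. y c * A_cross es T x c b) = (\<Sum>x\<in>Y. \<Sum>c\<in>set es. y c * A_cross es T x c b)"
    by (rule sum.swap)
  also have "\<dots> = (\<Sum>x\<in>Y. colc es T x b y)" using 2 by (rule sum.cong[OF refl])
  also have "(\<Sum>c\<in>set es. \<Sum>v\<in>N. y c * A_nv v c b) = (\<Sum>v\<in>N. \<Sum>c\<in>set es. y c * A_nv v c b)"
    by (rule sum.swap)
  also have "\<dots> = (\<Sum>v\<in>N. if snd v = b then - y (fst v) else 0)" using 3 by (rule sum.cong[OF refl])
  finally show ?thesis using 1 by simp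
qed


lemma over_row:
  assumes wf: "long_knot_diagram es Y N" and x: "(s,a,b) \<in> Y"
  shows "(\<Sum>c\<in>set es. Amat es Y N T a c * y c) = y a - T powi s * y (nxt es a) + (T powi s - 1) * y (nxt es b)"
proof -
  note u = over_unique[OF wf x]
  have ab: "a \<noteq> b" using u(2)[OF x] by simp
  have "(\<Sum>x\<in>Y. rowc es T x a y) = rowc es T (s,a,b) a y + (\<Sum>x\<in>Y-{(s,a,b)}. rowc es T x a y)"
    using x wf_basic(3)[OF wf] by (simp add: sum.remove)
  also have "(\<Sum>x\<in>Y-{(s,a,b)}. rowc es T x a y) = 0"
  proof (intro sum.neutral ballI)
    fix xx assume "xx \<in> Y-{(s,a,b)}"
    moreover obtain s' p q where "xx = (s',p,q)" by (cases xx) auto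
    ultimately have "(s',p,q) \<in> Y" "(s',p,q) \<noteq> (s,a,b)" "xx = (s',p,q)" by auto
    then show "rowc es T xx a y = 0" using u(1)[of "(s',p,q)"] u(2)[of "(s',p,q)"]
      unfolding rowc_def by auto
  qed
  finally have 1: "(\<Sum>x\<in>Y. rowc es T x a y) = - (T powi s) * y (nxt es a) + (T powi s - 1) * y (nxt es b)"
    using ab by (simp add: rowc_def)
  have 2: "(\<Sum>v\<in>N. if fst v = a then - y (snd v) else 0) = 0"
    using u(3) by (intro sum.neutral) auto
  show ?thesis using row_sum[OF wf u(5), of T y] 1 2 by simp
qed

lemma under_row:
  assumes wf: "long_knot_diagram es Y N" and x: "(s,b,a) \<in> Y"
  shows "(\<Sum>c\<in>set es. Amat es Y N T a c * y c) = y a - y (nxt es a)"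
proof -
  note u = under_unique[OF wf x]
  have ab: "a \<noteq> b" using u(2)[OF x] by simp
  have "(\<Sum>x\<in>Y. rowc es T x a y) = rowc es T (s,b,a) a y + (\<Sum>x\<in>Y-{(s,b,a)}. rowc es T x a y)"
    using x wf_basic(3)[OF wf] by (simp add: sum.remove)
  also have "(\<Sum>x\<in>Y-{(s,b,a)}. rowc es T x a y) = 0"
  proof (intro sum.neutral ballI)
    fix xx assume "xx \<in> Y-{(s,b,a)}"
    moreover obtain s' p q where "xx = (s',p,q)" by (cases xx) auto
    ultimately have "(s',p,q) \<in> Y" "(s',p,q) \<noteq> (s,b,a)" "xx = (s',p,q)" by auto
    then show "rowc es T xx a y = 0" using u(1)[of "(s',p,q)"] u(2)[of "(s',p,q)"]
      unfolding rowc_def by auto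
  qed
  finally have 1: "(\<Sum>x\<in>Y. rowc es T x a y) = - y (nxt es a)"
    using ab by (simp add: rowc_def)
  have 2: "(\<Sum>v\<in>N. if fst v = a then - y (snd v) else 0) = 0"
    using u(3) by (intro sum.neutral) auto
  show ?thesis using row_sum[OF wf u(5), of T y] 1 2 by simp
qed

lemma over_col:
  assumes wf: "long_knot_diagram es Y N" and x: "(s,a,b) \<in> Y"
  shows "(\<Sum>c\<in>set es. y c * Amat es Y N T c (nxt es a)) = y (nxt es a) - T powi s * y a"
proof -
  note u = over_unique[OF wf x]
  have d: "distinct es" using wf_basic[OF wf] by simp
  have b: "b \<in> set es" "b \<noteq> last es" using in_edges_nonlast[OF wf x] by auto
  have ab: "a \<noteq> b" using u(2)[OF x] by simp
  have na: "nxt es a \<in> set es" using nxt_in[OF d u(5) u(4)] .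
  have ninj: "nxt es a = nxt es e \<Longrightarrow> e \<in> set es \<Longrightarrow> e \<noteq> last es \<Longrightarrow> e = a" for e
    using nxt_inj[OF d u(5) u(4)] by metis
  have "(\<Sum>x\<in>Y. colc es T x (nxt es a) y) = colc es T (s,a,b) (nxt es a) y + (\<Sum>x\<in>Y-{(s,a,b)}. colc es T x (nxt es a) y)"
    using x wf_basic(3)[OF wf] by (simp add: sum.remove)
  also have "(\<Sum>x\<in>Y-{(s,a,b)}. colc es T x (nxt es a) y) = 0"
  proof (intro sum.neutral ballI)
    fix x0 assume "x0 \<in> Y-{(s,a,b)}"
    moreover obtain s' p q where "x0 = (s',p,q)" by (cases x0) auto
    ultimately have xx: "(s',p,q) \<in> Y" "(s',p,q) \<noteq> (s,a,b)" "x0 = (s',p,q)" by auto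
    note nl = in_edges_nonlast[OF wf xx(1)]
    have "nxt es a \<noteq> nxt es p" using ninj[of p] nl u(1)[OF xx(1)] xx(2) by auto
    moreover have "nxt es a \<noteq> nxt es q" using ninj[of q] nl u(2)[OF xx(1)] by auto
    ultimately show "colc es T x0 (nxt es a) y = 0" unfolding colc_def xx(3) by auto
  qed
  finally have 1: "(\<Sum>x\<in>Y. colc es T x (nxt es a) y) = - (T powi s) * y a"
    using ab ninj[of b] b by (auto simp add: colc_def)
  have 2: "(\<Sum>v\<in>N. if snd v = nxt es a then - y (fst v) else 0) = 0"
  proof (intro sum.neutral ballI)
    fix v assume v: "v \<in> N"
    have "snd v \<noteq> nxt es a" using nv_facts[OF wf v] ninj[of "fst v"] u(3)[OF v] by auto
    then show "(if snd v = nxt es a then - y (fst v) else 0) = 0" by simp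
  qed
  show ?thesis using col_sum[OF wf na, of y T] 1 2 by simp
qed

lemma under_col:
  assumes wf: "long_knot_diagram es Y N" and x: "(s,p,a) \<in> Y"
  shows "(\<Sum>c\<in>set es. y c * Amat es Y N T c (nxt es a)) = y (nxt es a) + (T powi s - 1) * y p - y a"
proof -
  note u = under_unique[OF wf x]
  have d: "distinct es" using wf_basic[OF wf] by simp
  have b: "p \<in> set es" "p \<noteq> last es" using in_edges_nonlast[OF wf x] by auto
  have ab: "a \<noteq> p" using u(2)[OF x] by simp
  have na: "nxt es a \<in> set es" using nxt_in[OF d u(5) u(4)] .
  have ninj: "nxt es a = nxt es e \<Longrightarrow> e \<in> set es \<Longrightarrow> e \<noteq> last es \<Longrightarrow> e = a" for e
    using nxt_inj[OF d u(5) u(4)] by metis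
  have "(\<Sum>x\<in>Y. colc es T x (nxt es a) y) = colc es T (s,p,a) (nxt es a) y + (\<Sum>x\<in>Y-{(s,p,a)}. colc es T x (nxt es a) y)"
    using x wf_basic(3)[OF wf] by (simp add: sum.remove)
  also have "(\<Sum>x\<in>Y-{(s,p,a)}. colc es T x (nxt es a) y) = 0"
  proof (intro sum.neutral ballI)
    fix x0 assume "x0 \<in> Y-{(s,p,a)}"
    moreover obtain s' p' q where "x0 = (s',p',q)" by (cases x0) auto
    ultimately have xx: "(s',p',q) \<in> Y" "(s',p',q) \<noteq> (s,p,a)" "x0 = (s',p',q)" by auto
    note nl = in_edges_nonlast[OF wf xx(1)]
    have "nxt es a \<noteq> nxt es p'" using ninj[of p'] nl u(2)[OF xx(1)] by auto
    moreover have "nxt es a \<noteq> nxt es q" using ninj[of q] nl u(1)[OF xx(1)] xx(2) by auto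
    ultimately show "colc es T x0 (nxt es a) y = 0" unfolding colc_def xx(3) by auto
  qed
  finally have 1: "(\<Sum>x\<in>Y. colc es T x (nxt es a) y) = (T powi s - 1) * y p - y a"
    using ab ninj[of p] b by (auto simp add: colc_def)
  have 2: "(\<Sum>v\<in>N. if snd v = nxt es a then - y (fst v) else 0) = 0"
  proof (intro sum.neutral ballI)
    fix v assume v: "v \<in> N"
    have "snd v \<noteq> nxt es a" using nv_facts[OF wf v] ninj[of "fst v"] u(3)[OF v] by auto
    then show "(if snd v = nxt es a then - y (fst v) else 0) = 0" by simp
  qed
  show ?thesis using col_sum[OF wf na, of y T] 1 2 by simp
qed



definition dl :: "'e \<Rightarrow> 'e \<Rightarrow> 'a::field" where "dl a b = (if a = b then 1 else 0)"

definition RL :: "'e set \<Rightarrow> ('e \<Rightarrow> 'e \<Rightarrow> 'a::field) \<Rightarrow> 'a \<Rightarrow> 'e \<Rightarrow> 'e \<Rightarrow> 'e \<Rightarrow> 'e \<Rightarrow> 'e \<Rightarrow> 'e \<Rightarrow> 'e \<Rightarrow> 'e \<Rightarrow> 'e \<Rightarrow> bool" where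
 "RL E g t i i1 i2 j j1 j2 k k1 k2 \<longleftrightarrow>
   (\<forall>b\<in>E. g k1 b = g k2 b + dl k1 b) \<and> (\<forall>b\<in>E. g k b = g k1 b + dl k b) \<and>
   (\<forall>b\<in>E. g j1 b = g j2 b + dl j1 b) \<and> (\<forall>b\<in>E. g j b = t * g j1 b - (t - 1) * g k1 b + dl j b) \<and>
   (\<forall>b\<in>E. g i1 b = t * g i2 b - (t - 1) * g j2 b + dl i1 b) \<and>
   (\<forall>b\<in>E. g i b = t * g i1 b - (t - 1) * g k2 b + dl i b) \<and>
   (\<forall>a\<in>E. g a j1 = t * g a j + dl a j1) \<and> (\<forall>a\<in>E. g a i1 = t * g a i + dl a i1) \<and>
   (\<forall>a\<in>E. g a k1 = g a k - (t - 1) * g a j + dl a k1)"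

definition RR :: "'e set \<Rightarrow> ('e \<Rightarrow> 'e \<Rightarrow> 'a::field) \<Rightarrow> 'a \<Rightarrow> 'e \<Rightarrow> 'e \<Rightarrow> 'e \<Rightarrow> 'e \<Rightarrow> 'e \<Rightarrow> 'e \<Rightarrow> 'e \<Rightarrow> 'e \<Rightarrow> 'e \<Rightarrow> bool" where
 "RR E g t i i1 i2 j j1 j2 k k1 k2 \<longleftrightarrow>
   (\<forall>b\<in>E. g k1 b = g k2 b + dl k1 b) \<and> (\<forall>b\<in>E. g j1 b = t * g j2 b - (t - 1) * g k2 b + dl j1 b) \<and>
   (\<forall>b\<in>E. g k b = g k1 b + dl k b) \<and> (\<forall>b\<in>E. g i1 b = t * g i2 b - (t - 1) * g k1 b + dl i1 b) \<and>
   (\<forall>b\<in>E. g j b = g j1 b + dl j b) \<and> (\<forall>b\<in>E. g i b = t * g i1 b - (t - 1) * g j1 b + dl i b) \<and>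
   (\<forall>a\<in>E. g a i1 = t * g a i + dl a i1) \<and> (\<forall>a\<in>E. g a j1 = g a j - (t - 1) * g a i + dl a j1) \<and>
   (\<forall>a\<in>E. g a k1 = g a k - (t - 1) * g a i1 + dl a k1)"

definition Sloc where
 "Sloc g1 g2 g3 T1 T2 L = sum_list (map (F1 g1 g2 g3 T1 T2) L) + sum_list (map (\<lambda>a. sum_list (map (F2 g1 g2 g3 T1 T2 a) L)) L)"

definition F1m where
 "F1m g1 g2 g3 T1 T2 i j = (let T3 = T1 * T2 in
     (T2 - 1) * (1/2 - g3 i i + T2 * g1 i i * g2 j i - T2 * g3 j j * g2 j i
        - (T2 - 1) * g3 i i * g2 j i + (T3 - 1) * g2 j i * g3 j i - g1 i i * g2 j j
        + 2 * g3 i i * g2 j j + g1 i i * g3 j j - g2 i i * g3 j j)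
     + ((T1 - 1) * T2 * (g3 j j * g1 j i - g2 j j * g1 j i + T2 * g1 j i * g2 j i)
        + (T3 - 1) * g3 j i * (1 - T2 * g1 i i + g2 i j + (T2 - 2) * g2 j j
                                - (T1 - 1) * (T2 + 1) * g1 j i)))"

lemma F1m: "T2 \<noteq> 1 \<Longrightarrow> (T2 - 1) * F1 g1 g2 g3 T1 T2 (1,i,j) = F1m g1 g2 g3 T1 T2 i j"
  unfolding F1_def F1m_def Let_def by (simp add: field_simps)

definition F2m where
 "F2m g1 g2 g3 T1 T2 s0 i0 j0 i1 j1 = (let T3 = T1 * T2 in
     (T1 powi s0 - 1) * (T3 - 1) * g1 j1 i0 * g3 j0 i1
     * (T2 powi s0 * g2 i1 i0 + g2 j1 j0 - T2 powi s0 * g2 j1 i0 - g2 i1 j0))"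

lemma F2m: "T2 \<noteq> 1 \<Longrightarrow> (T2 - 1) * F2 g1 g2 g3 T1 T2 (s0,i0,j0) (1,i1,j1) = F2m g1 g2 g3 T1 T2 s0 i0 j0 i1 j1"
  unfolding F2_def F2m_def Let_def by (simp add: field_simps)

lemma local_id:
  fixes T1 T2 :: "'a::field_char_0"
  assumes T: "T2 \<noteq> 1"
  and mem: "i \<in> E" "i1 \<in> E" "i2 \<in> E" "j \<in> E" "j1 \<in> E" "j2 \<in> E" "k \<in> E" "k1 \<in> E" "k2 \<in> E"
  and dist: "distinct [i,i1,j,j1,k,k1]"
  and d2: "i2 \<notin> {i1,j1,k1}" "j2 \<notin> {i1,j1,k1}" "k2 \<notin> {i1,j1,k1}"
  and l: "RL E gl1 T1 i i1 i2 j j1 j2 k k1 k2" "RL E gl2 T2 i i1 i2 j j1 j2 k k1 k2" "RL E gl3 (T1*T2) i i1 i2 j j1 j2 k k1 k2"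
  and r: "RR E gr1 T1 i i1 i2 j j1 j2 k k1 k2" "RR E gr2 T2 i i1 i2 j j1 j2 k k1 k2" "RR E gr3 (T1*T2) i i1 i2 j j1 j2 k k1 k2"
  and b1: "\<forall>p\<in>{i2,j2,k2}. \<forall>n\<in>{i,j,k}. gl1 p n = gr1 p n"
  and b2: "\<forall>p\<in>{i2,j2,k2}. \<forall>n\<in>{i,j,k}. gl2 p n = gr2 p n"
  and b3: "\<forall>p\<in>{i2,j2,k2}. \<forall>n\<in>{i,j,k}. gl3 p n = gr3 p n"
  shows "Sloc gl1 gl2 gl3 T1 T2 [(1,j,k),(1,i,k1),(1,i1,j1)] = Sloc gr1 gr2 gr3 T1 T2 [(1,i,j),(1,i1,k),(1,j1,k1)]"
proof -
  have dd: "i \<noteq> i1" "i \<noteq> j" "i \<noteq> j1" "i \<noteq> k" "i \<noteq> k1" "i1 \<noteq> j" "i1 \<noteq> j1" "i1 \<noteq> k" "i1 \<noteq> k1"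
     "j \<noteq> j1" "j \<noteq> k" "j \<noteq> k1" "j1 \<noteq> k" "j1 \<noteq> k1" "k \<noteq> k1" using dist by auto
  note dd' = dd dd[symmetric]
  have T': "T2 - 1 \<noteq> 0" using T by simp
  have "(T2 - 1) * Sloc gl1 gl2 gl3 T1 T2 [(1,j,k),(1,i,k1),(1,i1,j1)] = (T2 - 1) * Sloc gr1 gr2 gr3 T1 T2 [(1,i,j),(1,i1,k),(1,j1,k1)]"
    unfolding Sloc_def list.map sum_list_simps distrib_left F1m[OF T] F2m[OF T]
    apply (simp only: F1m_def F2m_def Let_def)
    apply (simp (no_asm_simp) add: l[unfolded RL_def dl_def] r[unfolded RR_def dl_def] b1 b2 b3 mem dd' d2)
    apply algebra
    done
  then show ?thesis using T' by simp
qed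

definition F2n where
 "F2n g1 g2 g3 T1 T2 a b p q = (T1 - 1) * g1 q a * g3 b p * (T2 * g2 p a + g2 q b - T2 * g2 q a - g2 p b)"

lemma F2n: "F2 g1 g2 g3 T1 T2 (1,a,b) (s1,p,q) = F2n g1 g2 g3 T1 T2 a b p q * (of_int s1 * ((T1*T2) powi s1 - 1) / (T2 powi s1 - 1))"
  unfolding F2_def F2n_def Let_def by (simp add: mult_ac)

lemma cross_A:
  fixes T1 T2 :: "'a::field_char_0"
  assumes T: "T2 \<noteq> 1"
  and mem: "i \<in> E" "i1 \<in> E" "i2 \<in> E" "j \<in> E" "j1 \<in> E" "j2 \<in> E" "k \<in> E" "k1 \<in> E" "k2 \<in> E" "p \<in> E" "q \<in> E"
  and dist: "distinct [i,i1,j,j1,k,k1]" and pq: "p \<notin> {i,i1,j,j1,k,k1}" "q \<notin> {i,i1,j,j1,k,k1}"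
  and l: "RL E gl1 T1 i i1 i2 j j1 j2 k k1 k2" "RL E gl2 T2 i i1 i2 j j1 j2 k k1 k2" "RL E gl3 (T1*T2) i i1 i2 j j1 j2 k k1 k2"
  and r: "RR E gr1 T1 i i1 i2 j j1 j2 k k1 k2" "RR E gr2 T2 i i1 i2 j j1 j2 k k1 k2" "RR E gr3 (T1*T2) i i1 i2 j j1 j2 k k1 k2"
  and b1: "\<forall>u\<in>{i2,j2,k2}. \<forall>v\<in>{p,q}. gl1 u v = gr1 u v" "\<forall>u\<in>{p,q}. \<forall>v\<in>{i,j,k}. gl1 u v = gr1 u v"
  and b2: "\<forall>u\<in>{i2,j2,k2}. \<forall>v\<in>{p,q}. gl2 u v = gr2 u v" "\<forall>u\<in>{p,q}. \<forall>v\<in>{i,j,k}. gl2 u v = gr2 u v"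
  and b3: "\<forall>u\<in>{i2,j2,k2}. \<forall>v\<in>{p,q}. gl3 u v = gr3 u v" "\<forall>u\<in>{p,q}. \<forall>v\<in>{i,j,k}. gl3 u v = gr3 u v"
  shows "sum_list (map (F2 gl1 gl2 gl3 T1 T2 (s0,p,q)) [(1,j,k),(1,i,k1),(1,i1,j1)])
       = sum_list (map (F2 gr1 gr2 gr3 T1 T2 (s0,p,q)) [(1,i,j),(1,i1,k),(1,j1,k1)])"
proof -
  have dd: "i \<noteq> i1" "i \<noteq> j" "i \<noteq> j1" "i \<noteq> k" "i \<noteq> k1" "i1 \<noteq> j" "i1 \<noteq> j1" "i1 \<noteq> k" "i1 \<noteq> k1"
     "j \<noteq> j1" "j \<noteq> k" "j \<noteq> k1" "j1 \<noteq> k" "j1 \<noteq> k1" "k \<noteq> k1" using dist by auto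
  note dd' = dd dd[symmetric]
  have pq': "p \<noteq> i" "p \<noteq> i1" "p \<noteq> j" "p \<noteq> j1" "p \<noteq> k" "p \<noteq> k1"
     "q \<noteq> i" "q \<noteq> i1" "q \<noteq> j" "q \<noteq> j1" "q \<noteq> k" "q \<noteq> k1" using pq by auto
  note pq'' = pq' pq'[symmetric]
  have T': "T2 - 1 \<noteq> 0" using T by simp
  have "(T2 - 1) * sum_list (map (F2 gl1 gl2 gl3 T1 T2 (s0,p,q)) [(1,j,k),(1,i,k1),(1,i1,j1)])
      = (T2 - 1) * sum_list (map (F2 gr1 gr2 gr3 T1 T2 (s0,p,q)) [(1,i,j),(1,i1,k),(1,j1,k1)])"
    unfolding list.map sum_list_simps distrib_left F2m[OF T]
    apply (simp only: F2m_def Let_def)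
    apply (simp (no_asm_simp) add: l[unfolded RL_def dl_def] r[unfolded RR_def dl_def] b1 b2 b3 mem dd' pq'')
    apply algebra
    done
  then show ?thesis using T' by simp
qed

lemma cross_B:
  fixes T1 T2 :: "'a::field_char_0"
  assumes mem: "i \<in> E" "i1 \<in> E" "i2 \<in> E" "j \<in> E" "j1 \<in> E" "j2 \<in> E" "k \<in> E" "k1 \<in> E" "k2 \<in> E" "p \<in> E" "q \<in> E"
  and dist: "distinct [i,i1,j,j1,k,k1]" and pq: "p \<notin> {i,i1,j,j1,k,k1}" "q \<notin> {i,i1,j,j1,k,k1}"
  and l: "RL E gl1 T1 i i1 i2 j j1 j2 k k1 k2" "RL E gl2 T2 i i1 i2 j j1 j2 k k1 k2" "RL E gl3 (T1*T2) i i1 i2 j j1 j2 k k1 k2"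
  and r: "RR E gr1 T1 i i1 i2 j j1 j2 k k1 k2" "RR E gr2 T2 i i1 i2 j j1 j2 k k1 k2" "RR E gr3 (T1*T2) i i1 i2 j j1 j2 k k1 k2"
  and b1: "\<forall>u\<in>{i2,j2,k2}. \<forall>v\<in>{p,q}. gl1 u v = gr1 u v" "\<forall>u\<in>{p,q}. \<forall>v\<in>{i,j,k}. gl1 u v = gr1 u v"
  and b2: "\<forall>u\<in>{i2,j2,k2}. \<forall>v\<in>{p,q}. gl2 u v = gr2 u v" "\<forall>u\<in>{p,q}. \<forall>v\<in>{i,j,k}. gl2 u v = gr2 u v"
  and b3: "\<forall>u\<in>{i2,j2,k2}. \<forall>v\<in>{p,q}. gl3 u v = gr3 u v" "\<forall>u\<in>{p,q}. \<forall>v\<in>{i,j,k}. gl3 u v = gr3 u v"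
  shows "sum_list (map (\<lambda>c. F2 gl1 gl2 gl3 T1 T2 c (s1,p,q)) [(1,j,k),(1,i,k1),(1,i1,j1)])
       = sum_list (map (\<lambda>c. F2 gr1 gr2 gr3 T1 T2 c (s1,p,q)) [(1,i,j),(1,i1,k),(1,j1,k1)])"
proof -
  have dd: "i \<noteq> i1" "i \<noteq> j" "i \<noteq> j1" "i \<noteq> k" "i \<noteq> k1" "i1 \<noteq> j" "i1 \<noteq> j1" "i1 \<noteq> k" "i1 \<noteq> k1"
     "j \<noteq> j1" "j \<noteq> k" "j \<noteq> k1" "j1 \<noteq> k" "j1 \<noteq> k1" "k \<noteq> k1" using dist by auto
  note dd' = dd dd[symmetric]
  have pq': "p \<noteq> i" "p \<noteq> i1" "p \<noteq> j" "p \<noteq> j1" "p \<noteq> k" "p \<noteq> k1"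
     "q \<noteq> i" "q \<noteq> i1" "q \<noteq> j" "q \<noteq> j1" "q \<noteq> k" "q \<noteq> k1" using pq by auto
  note pq'' = pq' pq'[symmetric]
  have "sum_list (map (\<lambda>c. F2n gl1 gl2 gl3 T1 T2 (fst (snd c)) (snd (snd c)) p q) [(1::int,j,k),(1,i,k1),(1,i1,j1)])
      = sum_list (map (\<lambda>c. F2n gr1 gr2 gr3 T1 T2 (fst (snd c)) (snd (snd c)) p q) [(1::int,i,j),(1,i1,k),(1,j1,k1)])"
    unfolding list.map sum_list_simps
    apply (simp only: F2n_def fst_conv snd_conv)
    apply (simp (no_asm_simp) add: l[unfolded RL_def dl_def] r[unfolded RR_def dl_def] b1 b2 b3 mem dd' pq'')
    apply algebra
    done
  note e = this
  show ?thesis using e unfolding list.map sum_list_simps F2n by (simp only: add_0_right distrib_right[symmetric] fst_conv snd_conv)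
qed



lemma inv_row: "is_inverse_on E M G \<Longrightarrow> a \<in> E \<Longrightarrow> b \<in> E \<Longrightarrow> (\<Sum>c\<in>E. M a c * G c b) = (if a = b then 1 else 0)"
  unfolding is_inverse_on_def by blast
lemma inv_col: "is_inverse_on E M G \<Longrightarrow> a \<in> E \<Longrightarrow> b \<in> E \<Longrightarrow> (\<Sum>c\<in>E. G a c * M c b) = (if a = b then 1 else 0)"
  unfolding is_inverse_on_def by blast

lemma Gmat_inv: assumes "invertible_on (set es) (Amat es Y N T)" shows "is_inverse_on (set es) (Amat es Y N T) (Gmat es Y N T)"
  using assms unfolding invertible_on_def Gmat_def inv_on_def by (rule someI_ex)

lemma L1: "x - y = d \<Longrightarrow> x = y + (d::'a::field)" by (simp add: algebra_simps)
lemma L2: "x - t * y + (t - 1) * z = d \<Longrightarrow> x = t * y - (t - 1) * z + (d::'a::field)" by (simp add: algebra_simps)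
lemma L3: "x - t * y = d \<Longrightarrow> x = t * y + (d::'a::field)" by (simp add: algebra_simps)
lemma L4: "x + (t - 1) * y - z = d \<Longrightarrow> x = z - (t - 1) * y + (d::'a::field)" by (simp add: algebra_simps)

locale r3 =
  fixes es :: "'e list" and X :: "'e crossing set" and N :: "('e \<times> 'e) set" and i j k :: 'e
  assumes wfl: "long_knot_diagram es (X \<union> {(1, j, k), (1, i, nxt es k), (1, nxt es i, nxt es j)}) N"
      and wfr: "long_knot_diagram es (X \<union> {(1, i, j), (1, nxt es i, k), (1, nxt es j, nxt es k)}) N"
begin

abbreviation "i1 \<equiv> nxt es i"
abbreviation "j1 \<equiv> nxt es j"
abbreviation "k1 \<equiv> nxt es k"
abbreviation "i2 \<equiv> nxt es i1"
abbreviation "j2 \<equiv> nxt es j1"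
abbreviation "k2 \<equiv> nxt es k1"
abbreviation "Ll \<equiv> {(1::int, j, k), (1, i, k1), (1, i1, j1)}"
abbreviation "Lr \<equiv> {(1::int, i, j), (1, i1, k), (1, j1, k1)}"
abbreviation "Xl \<equiv> X \<union> Ll"
abbreviation "Xr \<equiv> X \<union> Lr"
abbreviation "E \<equiv> set es"

lemma cl: "(1,j,k) \<in> Xl" "(1,i,k1) \<in> Xl" "(1,i1,j1) \<in> Xl" by auto
lemma cr: "(1,i,j) \<in> Xr" "(1,i1,k) \<in> Xr" "(1,j1,k1) \<in> Xr" by auto

lemma des: "distinct es" using wf_basic[OF wfl] by simp

lemma ne1: "i \<noteq> j" "i \<noteq> k" "i \<noteq> k1" "i1 \<noteq> j" "i1 \<noteq> k" "i1 \<noteq> k1" "j1 \<noteq> j" "j1 \<noteq> k" "j1 \<noteq> k1"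
  using over_unique(2)[OF wfr cr(1) cr(1)] over_unique(2)[OF wfr cr(1) cr(2)] over_unique(2)[OF wfr cr(1) cr(3)]
    over_unique(2)[OF wfr cr(2) cr(1)] over_unique(2)[OF wfr cr(2) cr(2)] over_unique(2)[OF wfr cr(2) cr(3)]
    over_unique(2)[OF wfr cr(3) cr(1)] over_unique(2)[OF wfr cr(3) cr(2)] over_unique(2)[OF wfr cr(3) cr(3)]
  by auto
lemma ne2: "j \<noteq> k" "j \<noteq> k1" "j \<noteq> j1" "i \<noteq> j1" "i1 \<noteq> j1"
  using over_unique(2)[OF wfl cl(1) cl(1)] over_unique(2)[OF wfl cl(1) cl(2)] over_unique(2)[OF wfl cl(1) cl(3)]
    over_unique(2)[OF wfl cl(2) cl(3)] over_unique(2)[OF wfl cl(3) cl(3)]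
  by auto

lemma inE: "i \<in> E" "j \<in> E" "k \<in> E" "i1 \<in> E" "j1 \<in> E" "k1 \<in> E"
  using over_unique(5)[OF wfl cl(1)] under_unique(5)[OF wfl cl(1)] over_unique(5)[OF wfl cl(2)]
    under_unique(5)[OF wfl cl(2)] over_unique(5)[OF wfl cl(3)] under_unique(5)[OF wfl cl(3)] by auto
lemma nl: "i \<noteq> last es" "j \<noteq> last es" "k \<noteq> last es" "i1 \<noteq> last es" "j1 \<noteq> last es" "k1 \<noteq> last es"
  using over_unique(4)[OF wfl cl(1)] under_unique(4)[OF wfl cl(1)] over_unique(4)[OF wfl cl(2)]
    under_unique(4)[OF wfl cl(2)] over_unique(4)[OF wfl cl(3)] under_unique(4)[OF wfl cl(3)] by auto

lemma inE2: "i2 \<in> E" "j2 \<in> E" "k2 \<in> E"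
  using nxt_in[OF des inE(4) nl(4)] nxt_in[OF des inE(5) nl(5)] nxt_in[OF des inE(6) nl(6)] by auto

lemma ninj: "a \<in> E \<Longrightarrow> a \<noteq> last es \<Longrightarrow> b \<in> E \<Longrightarrow> b \<noteq> last es \<Longrightarrow> a \<noteq> b \<Longrightarrow> nxt es a \<noteq> nxt es b"
  using nxt_inj[OF des] by blast

lemma ne3: "i \<noteq> i1" "k \<noteq> k1" using nxt_neq[OF des inE(1) nl(1)] nxt_neq[OF des inE(3) nl(3)] by auto

lemma dist: "distinct [i,i1,j,j1,k,k1]"
  using ne1 ne2 ne3 by auto

lemma d2: "i2 \<notin> {i1,j1,k1}" "j2 \<notin> {i1,j1,k1}" "k2 \<notin> {i1,j1,k1}"
proof -
  have a: "i2 \<noteq> i1" "j2 \<noteq> j1" "k2 \<noteq> k1"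
    using nxt_neq[OF des inE(4) nl(4)] nxt_neq[OF des inE(5) nl(5)] nxt_neq[OF des inE(6) nl(6)] by auto
  have b: "i2 \<noteq> j1" "i2 \<noteq> k1" "j2 \<noteq> i1" "j2 \<noteq> k1" "k2 \<noteq> i1" "k2 \<noteq> j1"
    using ninj[OF inE(4) nl(4) inE(2) nl(2)] ninj[OF inE(4) nl(4) inE(3) nl(3)]
      ninj[OF inE(5) nl(5) inE(1) nl(1)] ninj[OF inE(5) nl(5) inE(3) nl(3)]
      ninj[OF inE(6) nl(6) inE(1) nl(1)] ninj[OF inE(6) nl(6) inE(2) nl(2)] ne1 ne2 by auto
  show "i2 \<notin> {i1,j1,k1}" "j2 \<notin> {i1,j1,k1}" "k2 \<notin> {i1,j1,k1}" using a b by auto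
qed

lemma XLl: "X \<inter> Ll = {}"
proof -
  have "(1,j,k) \<notin> X" using over_unique(2)[OF wfr, of 1 j k "(1,i,j)"] by auto
  moreover have "(1,i,k1) \<notin> X" using over_unique(1)[OF wfr cr(1), of "(1,i,k1)"] ne2 by auto
  moreover have "(1,i1,j1) \<notin> X" using over_unique(1)[OF wfr cr(2), of "(1,i1,j1)"] ne1 by auto
  ultimately show ?thesis by auto
qed

lemma XLr: "X \<inter> Lr = {}"
proof -
  have "(1,i,j) \<notin> X" using over_unique(1)[OF wfl cl(2), of "(1,i,j)"] ne2 ne1 by auto
  moreover have "(1,i1,k) \<notin> X" using over_unique(1)[OF wfl cl(3), of "(1,i1,k)"] ne2 ne1 by auto
  moreover have "(1,j1,k1) \<notin> X" using over_unique(2)[OF wfl, of 1 j1 k1 "(1,i1,j1)"] by auto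
  ultimately show ?thesis by auto
qed

abbreviation "Lin \<equiv> {i,i1,j,j1,k,k1}"

lemma Xin:
  assumes x: "x \<in> X"
  shows "fst (snd x) \<notin> Lin" "snd (snd x) \<notin> Lin"
proof -
  have xl: "x \<in> Xl" using x by simp
  have xnl: "x \<notin> Ll" using x XLl by auto
  show "fst (snd x) \<notin> Lin"
    using over_unique(1)[OF wfl cl(1) xl] over_unique(1)[OF wfl cl(2) xl] over_unique(1)[OF wfl cl(3) xl]
      under_unique(2)[OF wfl cl(1) xl] under_unique(2)[OF wfl cl(2) xl] under_unique(2)[OF wfl cl(3) xl] xnl
    by auto
  show "snd (snd x) \<notin> Lin"
    using under_unique(1)[OF wfl cl(1) xl] under_unique(1)[OF wfl cl(2) xl] under_unique(1)[OF wfl cl(3) xl]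
      over_unique(2)[OF wfl cl(1) xl] over_unique(2)[OF wfl cl(2) xl] over_unique(2)[OF wfl cl(3) xl] xnl
    by auto
qed

lemma Nin: "v \<in> N \<Longrightarrow> fst v \<notin> Lin"
  using over_unique(3)[OF wfl cl(1)] over_unique(3)[OF wfl cl(2)] over_unique(3)[OF wfl cl(3)]
      under_unique(3)[OF wfl cl(1)] under_unique(3)[OF wfl cl(2)] under_unique(3)[OF wfl cl(3)] by auto

lemma nxt_notI: "e \<in> E \<Longrightarrow> e \<noteq> last es \<Longrightarrow> e \<notin> {i,j,k} \<Longrightarrow> nxt es e \<notin> {i1,j1,k1}"
  using ninj[of e i] ninj[of e j] ninj[of e k] inE nl by auto

lemma RLg:
  fixes G :: "'e \<Rightarrow> 'e \<Rightarrow> 'a::field"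
  assumes inv: "is_inverse_on E (Amat es Xl N T) G"
  shows "RL E G T i i1 i2 j j1 j2 k k1 k2"
proof -
  note ir = inv_row[OF inv] and ic = inv_col[OF inv]
  have r1: "G k1 b - G k2 b = dl k1 b" if "b \<in> E" for b
    using under_row[OF wfl cl(2), of T "\<lambda>c. G c b"] ir[OF inE(6) that] by (simp add: dl_def)
  have r2: "G k b - G k1 b = dl k b" if "b \<in> E" for b
    using under_row[OF wfl cl(1), of T "\<lambda>c. G c b"] ir[OF inE(3) that] by (simp add: dl_def)
  have r3: "G j1 b - G j2 b = dl j1 b" if "b \<in> E" for b
    using under_row[OF wfl cl(3), of T "\<lambda>c. G c b"] ir[OF inE(5) that] by (simp add: dl_def)
  have r4: "G j b - T * G j1 b + (T - 1) * G k1 b = dl j b" if "b \<in> E" for b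
    using over_row[OF wfl cl(1), of T "\<lambda>c. G c b"] ir[OF inE(2) that] by (simp add: dl_def)
  have r5: "G i1 b - T * G i2 b + (T - 1) * G j2 b = dl i1 b" if "b \<in> E" for b
    using over_row[OF wfl cl(3), of T "\<lambda>c. G c b"] ir[OF inE(4) that] by (simp add: dl_def)
  have r6: "G i b - T * G i1 b + (T - 1) * G k2 b = dl i b" if "b \<in> E" for b
    using over_row[OF wfl cl(2), of T "\<lambda>c. G c b"] ir[OF inE(1) that] by (simp add: dl_def)
  have c1: "G a j1 - T * G a j = dl a j1" if "a \<in> E" for a
    using over_col[OF wfl cl(1), of "\<lambda>c. G a c" T] ic[OF that inE(5)] by (simp add: dl_def)
  have c2: "G a i1 - T * G a i = dl a i1" if "a \<in> E" for a
    using over_col[OF wfl cl(2), of "\<lambda>c. G a c" T] ic[OF that inE(4)] by (simp add: dl_def)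
  have c3: "G a k1 + (T - 1) * G a j - G a k = dl a k1" if "a \<in> E" for a
    using under_col[OF wfl cl(1), of "\<lambda>c. G a c" T] ic[OF that inE(6)] by (simp add: dl_def)
  show ?thesis unfolding RL_def
    by (intro conjI ballI L1[OF r1] L1[OF r2] L1[OF r3] L2[OF r4] L2[OF r5] L2[OF r6] L3[OF c1] L3[OF c2] L4[OF c3])
qed

lemma RRg:
  fixes G :: "'e \<Rightarrow> 'e \<Rightarrow> 'a::field"
  assumes inv: "is_inverse_on E (Amat es Xr N T) G"
  shows "RR E G T i i1 i2 j j1 j2 k k1 k2"
proof -
  note ir = inv_row[OF inv] and ic = inv_col[OF inv]
  have r1: "G k1 b - G k2 b = dl k1 b" if "b \<in> E" for b
    using under_row[OF wfr cr(3), of T "\<lambda>c. G c b"] ir[OF inE(6) that] by (simp add: dl_def)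
  have r2: "G j1 b - T * G j2 b + (T - 1) * G k2 b = dl j1 b" if "b \<in> E" for b
    using over_row[OF wfr cr(3), of T "\<lambda>c. G c b"] ir[OF inE(5) that] by (simp add: dl_def)
  have r3: "G k b - G k1 b = dl k b" if "b \<in> E" for b
    using under_row[OF wfr cr(2), of T "\<lambda>c. G c b"] ir[OF inE(3) that] by (simp add: dl_def)
  have r4: "G i1 b - T * G i2 b + (T - 1) * G k1 b = dl i1 b" if "b \<in> E" for b
    using over_row[OF wfr cr(2), of T "\<lambda>c. G c b"] ir[OF inE(4) that] by (simp add: dl_def)
  have r5: "G j b - G j1 b = dl j b" if "b \<in> E" for b
    using under_row[OF wfr cr(1), of T "\<lambda>c. G c b"] ir[OF inE(2) that] by (simp add: dl_def)
  have r6: "G i b - T * G i1 b + (T - 1) * G j1 b = dl i b" if "b \<in> E" for b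
    using over_row[OF wfr cr(1), of T "\<lambda>c. G c b"] ir[OF inE(1) that] by (simp add: dl_def)
  have c1: "G a i1 - T * G a i = dl a i1" if "a \<in> E" for a
    using over_col[OF wfr cr(1), of "\<lambda>c. G a c" T] ic[OF that inE(4)] by (simp add: dl_def)
  have c2: "G a j1 + (T - 1) * G a i - G a j = dl a j1" if "a \<in> E" for a
    using under_col[OF wfr cr(1), of "\<lambda>c. G a c" T] ic[OF that inE(5)] by (simp add: dl_def)
  have c3: "G a k1 + (T - 1) * G a i1 - G a k = dl a k1" if "a \<in> E" for a
    using under_col[OF wfr cr(2), of "\<lambda>c. G a c" T] ic[OF that inE(6)] by (simp add: dl_def)
  show ?thesis unfolding RR_def
    by (intro conjI ballI L1[OF r1] L2[OF r2] L1[OF r3] L2[OF r4] L1[OF r5] L2[OF r6] L3[OF c1] L4[OF c2] L4[OF c3])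
qed

lemma finX: "finite X" using wf_basic(3)[OF wfl] by simp

lemma Eq:
  fixes Gl Gr :: "'e \<Rightarrow> 'e \<Rightarrow> 'a::field"
  assumes il: "is_inverse_on E (Amat es Xl N T) Gl" and ir: "is_inverse_on E (Amat es Xr N T) Gr"
  and b: "\<beta> \<in> E" "\<beta> \<notin> {i1,j1,k1}" and a: "\<alpha> \<in> E" "\<alpha> \<notin> {i1,j1,k1}"
  shows "Gl \<alpha> \<beta> = Gr \<alpha> \<beta>"
proof -
  have R: "RL E Gl T i i1 i2 j j1 j2 k k1 k2" by (rule RLg[OF il])
  have g: "Gl k1 \<beta> = Gl k2 \<beta>" "Gl k \<beta> = Gl k1 \<beta> + dl k \<beta>" "Gl j1 \<beta> = Gl j2 \<beta>"
    "Gl j \<beta> = T * Gl j1 \<beta> - (T - 1) * Gl k1 \<beta> + dl j \<beta>"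
    "Gl i1 \<beta> = T * Gl i2 \<beta> - (T - 1) * Gl j2 \<beta>"
    "Gl i \<beta> = T * Gl i1 \<beta> - (T - 1) * Gl k2 \<beta> + dl i \<beta>"
    using R b unfolding RL_def by (auto simp: dl_def)
  define y where "y c = (if c = j1 then Gl j \<beta> - dl j \<beta> else if c = k1 then Gl k \<beta> - dl k \<beta>
      else if c = i1 then T * Gl i2 \<beta> - (T - 1) * (Gl k \<beta> - dl k \<beta>) else Gl c \<beta>)" for c
  have yv: "y j1 = Gl j \<beta> - dl j \<beta>" "y k1 = Gl k \<beta> - dl k \<beta>"
    "y i1 = T * Gl i2 \<beta> - (T - 1) * (Gl k \<beta> - dl k \<beta>)"
    using dist by (auto simp: y_def)
  have yo: "c \<notin> {i1,j1,k1} \<Longrightarrow> y c = Gl c \<beta>" for c by (auto simp: y_def)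
  have yo2: "y i = Gl i \<beta>" "y j = Gl j \<beta>" "y k = Gl k \<beta>" "y i2 = Gl i2 \<beta>" "y j2 = Gl j2 \<beta>" "y k2 = Gl k2 \<beta>"
    using yo dist d2 by auto
  have rows: "(\<Sum>c\<in>E. Amat es Xr N T a c * y c) = dl a \<beta>" if aE: "a \<in> E" for a
  proof (cases "a \<in> Lin")
    case True
    then consider "a = i" | "a = i1" | "a = j" | "a = j1" | "a = k" | "a = k1" by auto
    then show ?thesis
    proof cases
      case 1
      have "(\<Sum>c\<in>E. Amat es Xr N T a c * y c) = y i - T * y i1 + (T - 1) * y j1"
        using over_row[OF wfr cr(1), of T y] 1 by simp
      also have "\<dots> = dl i \<beta>" unfolding yv yo2 g by (simp add: algebra_simps)
      finally show ?thesis using 1 by simp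
    next
      case 2
      have "(\<Sum>c\<in>E. Amat es Xr N T a c * y c) = y i1 - T * y i2 + (T - 1) * y k1"
        using over_row[OF wfr cr(2), of T y] 2 by simp
      also have "\<dots> = 0" unfolding yv yo2 by (simp add: algebra_simps)
      finally show ?thesis using 2 b by (auto simp add: dl_def)
    next
      case 3
      have "(\<Sum>c\<in>E. Amat es Xr N T a c * y c) = y j - y j1"
        using under_row[OF wfr cr(1), of T y] 3 by simp
      also have "\<dots> = dl j \<beta>" unfolding yv yo2 by (simp add: algebra_simps)
      finally show ?thesis using 3 by simp
    next
      case 4
      have "(\<Sum>c\<in>E. Amat es Xr N T a c * y c) = y j1 - T * y j2 + (T - 1) * y k2"
        using over_row[OF wfr cr(3), of T y] 4 by simp
      also have "\<dots> = 0" unfolding yv yo2 g by (simp add: algebra_simps)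
      finally show ?thesis using 4 b by (auto simp add: dl_def)
    next
      case 5
      have "(\<Sum>c\<in>E. Amat es Xr N T a c * y c) = y k - y k1"
        using under_row[OF wfr cr(2), of T y] 5 by simp
      also have "\<dots> = dl k \<beta>" unfolding yv yo2 by (simp add: algebra_simps)
      finally show ?thesis using 5 by simp
    next
      case 6
      have "(\<Sum>c\<in>E. Amat es Xr N T a c * y c) = y k1 - y k2"
        using under_row[OF wfr cr(3), of T y] 6 by simp
      also have "\<dots> = 0" unfolding yv yo2 g by (simp add: algebra_simps)
      finally show ?thesis using 6 b by (auto simp add: dl_def)
    qed
  next
    case False
    define z where "z c = Gl c \<beta>" for c
    have ya: "y a = z a" using False yo z_def by auto
    have rX: "rowc es T x a y = rowc es T x a z" if x: "x \<in> X" for x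
    proof -
      obtain s p q where xs: "x = (s,p,q)" by (cases x) auto
      have xl: "x \<in> Xl" using x by simp
      have pq: "p \<notin> Lin" "q \<notin> Lin" using Xin[OF x] xs by auto
      have "nxt es p \<notin> {i1,j1,k1}" "nxt es q \<notin> {i1,j1,k1}"
        using nxt_notI in_edges_nonlast[OF wfl xl] xs pq by auto
      then show ?thesis unfolding rowc_def xs z_def using yo by simp
    qed
    have rL: "rowc es T x a w = 0" if "x \<in> Ll \<union> Lr" for x w
      using that False unfolding rowc_def by auto
    have sr: "(\<Sum>x\<in>Xr. rowc es T x a y) = (\<Sum>x\<in>X. rowc es T x a z)"
    proof -
      have "(\<Sum>x\<in>Xr. rowc es T x a y) = (\<Sum>x\<in>X. rowc es T x a y) + (\<Sum>x\<in>Lr. rowc es T x a y)"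
        using finX XLr by (intro sum.union_disjoint) auto
      also have "(\<Sum>x\<in>Lr. rowc es T x a y) = 0" using rL by (intro sum.neutral) auto
      finally show ?thesis using rX by simp
    qed
    have sl: "(\<Sum>x\<in>Xl. rowc es T x a z) = (\<Sum>x\<in>X. rowc es T x a z)"
    proof -
      have "(\<Sum>x\<in>Xl. rowc es T x a z) = (\<Sum>x\<in>X. rowc es T x a z) + (\<Sum>x\<in>Ll. rowc es T x a z)"
        using finX XLl by (intro sum.union_disjoint) auto
      also have "(\<Sum>x\<in>Ll. rowc es T x a z) = 0" using rL by (intro sum.neutral) auto
      finally show ?thesis by simp
    qed
    have sN: "(\<Sum>v\<in>N. if fst v = a then - y (snd v) else 0) = (\<Sum>v\<in>N. if fst v = a then - z (snd v) else 0)"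
    proof (rule sum.cong[OF refl])
      fix v assume v: "v \<in> N"
      show "(if fst v = a then - y (snd v) else 0) = (if fst v = a then - z (snd v) else 0)"
      proof (cases "fst v = a")
        case True
        have "snd v \<notin> {i1,j1,k1}" using nv_facts[OF wfl v] nxt_notI False True by auto
        then show ?thesis using yo z_def by simp
      qed simp
    qed
    have "(\<Sum>c\<in>E. Amat es Xr N T a c * y c) = (\<Sum>c\<in>E. Amat es Xl N T a c * z c)"
      unfolding row_sum[OF wfr aE] row_sum[OF wfl aE] sr sl sN ya ..
    also have "\<dots> = dl a \<beta>" unfolding z_def using inv_row[OF il aE b(1)] by (simp add: dl_def)
    finally show ?thesis .
  qed
  have "(\<Sum>d\<in>E. Gr \<alpha> d * (\<Sum>c\<in>E. Amat es Xr N T d c * y c)) = (\<Sum>d\<in>E. Gr \<alpha> d * dl d \<beta>)"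
    using rows by simp
  also have "\<dots> = Gr \<alpha> \<beta>"
  proof -
    have "(\<Sum>d\<in>E. Gr \<alpha> d * dl d \<beta>) = (\<Sum>d\<in>E. if d = \<beta> then Gr \<alpha> d else 0)"
      by (rule sum.cong) (auto simp: dl_def)
    then show ?thesis using b by simp
  qed
  finally have 1: "(\<Sum>d\<in>E. Gr \<alpha> d * (\<Sum>c\<in>E. Amat es Xr N T d c * y c)) = Gr \<alpha> \<beta>" .
  have "(\<Sum>d\<in>E. Gr \<alpha> d * (\<Sum>c\<in>E. Amat es Xr N T d c * y c)) = (\<Sum>d\<in>E. \<Sum>c\<in>E. Gr \<alpha> d * Amat es Xr N T d c * y c)"
    by (simp add: sum_distrib_left mult.assoc)
  also have "\<dots> = (\<Sum>c\<in>E. \<Sum>d\<in>E. Gr \<alpha> d * Amat es Xr N T d c * y c)" by (rule sum.swap)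
  also have "\<dots> = (\<Sum>c\<in>E. (\<Sum>d\<in>E. Gr \<alpha> d * Amat es Xr N T d c) * y c)" by (simp add: sum_distrib_right)
  also have "\<dots> = (\<Sum>c\<in>E. (if \<alpha> = c then 1 else 0) * y c)"
    using inv_col[OF ir a(1)] by (intro sum.cong) auto
  also have "\<dots> = (\<Sum>c\<in>E. if c = \<alpha> then y c else 0)" by (rule sum.cong) auto
  also have "\<dots> = y \<alpha>" using a by simp
  finally have "Gr \<alpha> \<beta> = y \<alpha>" using 1 by simp
  then show ?thesis using yo a by simp
qed

end


lemma split_theta:
  fixes f :: "'c \<Rightarrow> 'a::comm_monoid_add"
  assumes "finite X" "finite L" "X \<inter> L = {}"
  shows "(\<Sum>c\<in>X\<union>L. f c) + (\<Sum>c0\<in>X\<union>L. \<Sum>c1\<in>X\<union>L. h c0 c1)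
       = ((\<Sum>c\<in>X. f c) + (\<Sum>c0\<in>X. \<Sum>c1\<in>X. h c0 c1)) + (\<Sum>c0\<in>X. \<Sum>c1\<in>L. h c0 c1)
         + (\<Sum>c1\<in>X. \<Sum>c0\<in>L. h c0 c1) + ((\<Sum>c\<in>L. f c) + (\<Sum>c0\<in>L. \<Sum>c1\<in>L. h c0 c1))"
proof -
  have u: "(\<Sum>c\<in>X\<union>L. g c) = (\<Sum>c\<in>X. g c) + (\<Sum>c\<in>L. g c)" for g :: "'c \<Rightarrow> 'a"
    using assms by (intro sum.union_disjoint) auto
  have sw: "(\<Sum>c0\<in>L. \<Sum>c1\<in>X. h c0 c1) = (\<Sum>c1\<in>X. \<Sum>c0\<in>L. h c0 c1)" by (rule sum.swap)
  show ?thesis unfolding u sum.distrib sw by (simp add: ac_simps)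
qed

lemma F1_cong:
  assumes "\<forall>u\<in>{p,q}. \<forall>v\<in>{p,q}. g1 u v = g1' u v \<and> g2 u v = g2' u v \<and> g3 u v = g3' u v"
  shows "F1 g1 g2 g3 T1 T2 (s,p,q) = F1 g1' g2' g3' T1 T2 (s,p,q)"
  using assms by (simp add: F1_def)

lemma F2_cong:
  assumes "\<forall>u\<in>{p0,q0,p1,q1}. \<forall>v\<in>{p0,q0,p1,q1}. g1 u v = g1' u v \<and> g2 u v = g2' u v \<and> g3 u v = g3' u v"
  shows "F2 g1 g2 g3 T1 T2 (s0,p0,q0) (s1,p1,q1) = F2 g1' g2' g3' T1 T2 (s0,p0,q0) (s1,p1,q1)"
  using assms by (simp add: F2_def)

theorem mainTheorem4:
  fixes es :: "'e list" and X :: "'e crossing set" and N :: "('e \<times> 'e) set"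
    and phi :: "'e \<Rightarrow> int" and i j k :: 'e and T1 T2 :: "'a::field_char_0"
  defines "Xl \<equiv> X \<union> {(1, j, k), (1, i, nxt es k), (1, nxt es i, nxt es j)}"
      and "Xr \<equiv> X \<union> {(1, i, j), (1, nxt es i, k), (1, nxt es j, nxt es k)}"
  assumes wfl: "long_knot_diagram es Xl N"
      and wfr: "long_knot_diagram es Xr N"
      and rot: "phi (nxt es i) = 0" "phi (nxt es j) = 0" "phi (nxt es k) = 0"
      and T: "T1 \<noteq> 0" "T2 \<noteq> 0" "T2 \<noteq> 1"
      and invl: "invertible_on (set es) (Amat es Xl N T1)"
                "invertible_on (set es) (Amat es Xl N T2)"
                "invertible_on (set es) (Amat es Xl N (T1 * T2))"
      and invr: "invertible_on (set es) (Amat es Xr N T1)"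
                "invertible_on (set es) (Amat es Xr N T2)"
                "invertible_on (set es) (Amat es Xr N (T1 * T2))"
  shows "theta0 es Xl N phi T1 T2 = theta0 es Xr N phi T1 T2"
proof -
  interpret R: r3 es X N i j k
    using wfl wfr unfolding Xl_def Xr_def by unfold_locales auto
  define E where "E = set es"
  define i1 where "i1 = nxt es i"
  define j1 where "j1 = nxt es j"
  define k1 where "k1 = nxt es k"
  define i2 where "i2 = nxt es i1"
  define j2 where "j2 = nxt es j1"
  define k2 where "k2 = nxt es k1"
  define Ll where "Ll = [(1::int, j, k), (1, i, k1), (1, i1, j1)]"
  define Lr where "Lr = [(1::int, i, j), (1, i1, k), (1, j1, k1)]"
  have XlL: "Xl = X \<union> set Ll" unfolding Xl_def Ll_def k1_def i1_def j1_def by auto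
  have XrL: "Xr = X \<union> set Lr" unfolding Xr_def Lr_def k1_def i1_def j1_def by auto
  have dLl: "distinct Ll" and dLr: "distinct Lr"
    unfolding Ll_def Lr_def i1_def j1_def k1_def using R.dist by auto
  have finX: "finite X" by (rule R.finX)
  have XLl: "X \<inter> set Ll = {}" using R.XLl unfolding Ll_def i1_def j1_def k1_def by auto
  have XLr: "X \<inter> set Lr = {}" using R.XLr unfolding Lr_def i1_def j1_def k1_def by auto
  have mem: "i \<in> E" "i1 \<in> E" "i2 \<in> E" "j \<in> E" "j1 \<in> E" "j2 \<in> E" "k \<in> E" "k1 \<in> E" "k2 \<in> E"
    unfolding E_def i1_def j1_def k1_def i2_def j2_def k2_def using R.inE R.inE2 by auto
  have dist: "distinct [i,i1,j,j1,k,k1]" unfolding i1_def j1_def k1_def by (rule R.dist)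
  have d2: "i2 \<notin> {i1,j1,k1}" "j2 \<notin> {i1,j1,k1}" "k2 \<notin> {i1,j1,k1}"
    unfolding i1_def j1_def k1_def i2_def j2_def k2_def using R.d2 by auto
  have Xin: "x \<in> X \<Longrightarrow> fst (snd x) \<notin> {i,i1,j,j1,k,k1} \<and> snd (snd x) \<notin> {i,i1,j,j1,k,k1}
              \<and> fst (snd x) \<in> E \<and> snd (snd x) \<in> E" for x
    using R.Xin[of x] in_edges_nonlast[OF R.wfl, of x] unfolding i1_def j1_def k1_def E_def by auto
  define gl1 where "gl1 = Gmat es Xl N T1"
  define gl2 where "gl2 = Gmat es Xl N T2"
  define gl3 where "gl3 = Gmat es Xl N (T1 * T2)"
  define gr1 where "gr1 = Gmat es Xr N T1"
  define gr2 where "gr2 = Gmat es Xr N T2"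
  define gr3 where "gr3 = Gmat es Xr N (T1 * T2)"
  have il1: "is_inverse_on (set es) (Amat es R.Xl N T1) gl1" using Gmat_inv[OF invl(1)] unfolding gl1_def Xl_def .
  have il2: "is_inverse_on (set es) (Amat es R.Xl N T2) gl2" using Gmat_inv[OF invl(2)] unfolding gl2_def Xl_def .
  have il3: "is_inverse_on (set es) (Amat es R.Xl N (T1*T2)) gl3" using Gmat_inv[OF invl(3)] unfolding gl3_def Xl_def .
  have ir1: "is_inverse_on (set es) (Amat es R.Xr N T1) gr1" using Gmat_inv[OF invr(1)] unfolding gr1_def Xr_def .
  have ir2: "is_inverse_on (set es) (Amat es R.Xr N T2) gr2" using Gmat_inv[OF invr(2)] unfolding gr2_def Xr_def .
  have ir3: "is_inverse_on (set es) (Amat es R.Xr N (T1*T2)) gr3" using Gmat_inv[OF invr(3)] unfolding gr3_def Xr_def .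
  have l: "RL E gl1 T1 i i1 i2 j j1 j2 k k1 k2" "RL E gl2 T2 i i1 i2 j j1 j2 k k1 k2" "RL E gl3 (T1*T2) i i1 i2 j j1 j2 k k1 k2"
    using R.RLg[OF il1] R.RLg[OF il2] R.RLg[OF il3] unfolding E_def i1_def j1_def k1_def i2_def j2_def k2_def by auto
  have r: "RR E gr1 T1 i i1 i2 j j1 j2 k k1 k2" "RR E gr2 T2 i i1 i2 j j1 j2 k k1 k2" "RR E gr3 (T1*T2) i i1 i2 j j1 j2 k k1 k2"
    using R.RRg[OF ir1] R.RRg[OF ir2] R.RRg[OF ir3] unfolding E_def i1_def j1_def k1_def i2_def j2_def k2_def by auto
  have eq: "gl1 a b = gr1 a b \<and> gl2 a b = gr2 a b \<and> gl3 a b = gr3 a b"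
    if "a \<in> E" "a \<notin> {i1,j1,k1}" "b \<in> E" "b \<notin> {i1,j1,k1}" for a b
    using R.Eq[OF il1 ir1, of b a] R.Eq[OF il2 ir2, of b a] R.Eq[OF il3 ir3, of b a] that
    unfolding E_def i1_def j1_def k1_def by auto
  have eqo: "\<forall>u\<in>{i2,j2,k2}. \<forall>v\<in>{p,q}. gl1 u v = gr1 u v" "\<forall>u\<in>{p,q}. \<forall>v\<in>{i,j,k}. gl1 u v = gr1 u v"
     "\<forall>u\<in>{i2,j2,k2}. \<forall>v\<in>{p,q}. gl2 u v = gr2 u v" "\<forall>u\<in>{p,q}. \<forall>v\<in>{i,j,k}. gl2 u v = gr2 u v"
     "\<forall>u\<in>{i2,j2,k2}. \<forall>v\<in>{p,q}. gl3 u v = gr3 u v" "\<forall>u\<in>{p,q}. \<forall>v\<in>{i,j,k}. gl3 u v = gr3 u v"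
    if "p \<in> E" "q \<in> E" "p \<notin> {i,i1,j,j1,k,k1}" "q \<notin> {i,i1,j,j1,k,k1}" for p q
    using eq that mem d2 dist by auto
  have eqb: "\<forall>p\<in>{i2,j2,k2}. \<forall>n\<in>{i,j,k}. gl1 p n = gr1 p n"
     "\<forall>p\<in>{i2,j2,k2}. \<forall>n\<in>{i,j,k}. gl2 p n = gr2 p n"
     "\<forall>p\<in>{i2,j2,k2}. \<forall>n\<in>{i,j,k}. gl3 p n = gr3 p n"
    using eq mem d2 dist by auto
  have thl: "theta0 es Xl N phi T1 T2 = (\<Sum>c\<in>Xl. F1 gl1 gl2 gl3 T1 T2 c)
       + (\<Sum>c0\<in>Xl. \<Sum>c1\<in>Xl. F2 gl1 gl2 gl3 T1 T2 c0 c1) + (\<Sum>e\<in>E. F3 gl3 phi e)"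
    by (simp add: theta0_def Let_def gl1_def gl2_def gl3_def E_def)
  have thr: "theta0 es Xr N phi T1 T2 = (\<Sum>c\<in>Xr. F1 gr1 gr2 gr3 T1 T2 c)
       + (\<Sum>c0\<in>Xr. \<Sum>c1\<in>Xr. F2 gr1 gr2 gr3 T1 T2 c0 c1) + (\<Sum>e\<in>E. F3 gr3 phi e)"
    by (simp add: theta0_def Let_def gr1_def gr2_def gr3_def E_def)
  note spl = split_theta[OF finX _ XLl, of "F1 gl1 gl2 gl3 T1 T2" "F2 gl1 gl2 gl3 T1 T2"]
  note spr = split_theta[OF finX _ XLr, of "F1 gr1 gr2 gr3 T1 T2" "F2 gr1 gr2 gr3 T1 T2"]
  have A1: "(\<Sum>c\<in>X. F1 gl1 gl2 gl3 T1 T2 c) = (\<Sum>c\<in>X. F1 gr1 gr2 gr3 T1 T2 c)"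
  proof (rule sum.cong[OF refl])
    fix c assume c: "c \<in> X"
    obtain s p q where cs: "c = (s,p,q)" by (cases c) auto
    show "F1 gl1 gl2 gl3 T1 T2 c = F1 gr1 gr2 gr3 T1 T2 c"
      unfolding cs by (rule F1_cong) (use Xin[OF c] eq cs in auto)
  qed
  have A2: "(\<Sum>c0\<in>X. \<Sum>c1\<in>X. F2 gl1 gl2 gl3 T1 T2 c0 c1) = (\<Sum>c0\<in>X. \<Sum>c1\<in>X. F2 gr1 gr2 gr3 T1 T2 c0 c1)"
  proof (intro sum.cong[OF refl])
    fix c0 c1 assume c: "c0 \<in> X" "c1 \<in> X"
    obtain s0 p0 q0 where cs0: "c0 = (s0,p0,q0)" by (cases c0) auto
    obtain s1 p1 q1 where cs1: "c1 = (s1,p1,q1)" by (cases c1) auto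
    show "F2 gl1 gl2 gl3 T1 T2 c0 c1 = F2 gr1 gr2 gr3 T1 T2 c0 c1"
      unfolding cs0 cs1 by (rule F2_cong) (use Xin[OF c(1)] Xin[OF c(2)] eq cs0 cs1 in auto)
  qed
  have B: "(\<Sum>c0\<in>X. \<Sum>c1\<in>set Ll. F2 gl1 gl2 gl3 T1 T2 c0 c1) = (\<Sum>c0\<in>X. \<Sum>c1\<in>set Lr. F2 gr1 gr2 gr3 T1 T2 c0 c1)"
  proof (rule sum.cong[OF refl])
    fix c0 assume c: "c0 \<in> X"
    obtain s0 p q where cs: "c0 = (s0,p,q)" by (cases c0) auto
    have x: "p \<in> E" "q \<in> E" "p \<notin> {i,i1,j,j1,k,k1}" "q \<notin> {i,i1,j,j1,k,k1}" using Xin[OF c] cs by auto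
    show "(\<Sum>c1\<in>set Ll. F2 gl1 gl2 gl3 T1 T2 c0 c1) = (\<Sum>c1\<in>set Lr. F2 gr1 gr2 gr3 T1 T2 c0 c1)"
      unfolding cs Ll_def Lr_def sum.distinct_set_conv_list[OF dLl[unfolded Ll_def]] sum.distinct_set_conv_list[OF dLr[unfolded Lr_def]]
      by (rule cross_A[OF T(3) mem x(1,2) dist x(3,4) l r eqo[OF x]])
  qed
  have C: "(\<Sum>c1\<in>X. \<Sum>c0\<in>set Ll. F2 gl1 gl2 gl3 T1 T2 c0 c1) = (\<Sum>c1\<in>X. \<Sum>c0\<in>set Lr. F2 gr1 gr2 gr3 T1 T2 c0 c1)"
  proof (rule sum.cong[OF refl])
    fix c1 assume c: "c1 \<in> X"
    obtain s1 p q where cs: "c1 = (s1,p,q)" by (cases c1) auto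
    have x: "p \<in> E" "q \<in> E" "p \<notin> {i,i1,j,j1,k,k1}" "q \<notin> {i,i1,j,j1,k,k1}" using Xin[OF c] cs by auto
    show "(\<Sum>c0\<in>set Ll. F2 gl1 gl2 gl3 T1 T2 c0 c1) = (\<Sum>c0\<in>set Lr. F2 gr1 gr2 gr3 T1 T2 c0 c1)"
      unfolding cs Ll_def Lr_def sum.distinct_set_conv_list[OF dLl[unfolded Ll_def]] sum.distinct_set_conv_list[OF dLr[unfolded Lr_def]]
      by (rule cross_B[OF mem x(1,2) dist x(3,4) l r eqo[OF x]])
  qed
  have D: "(\<Sum>c\<in>set Ll. F1 gl1 gl2 gl3 T1 T2 c) + (\<Sum>c0\<in>set Ll. \<Sum>c1\<in>set Ll. F2 gl1 gl2 gl3 T1 T2 c0 c1)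
         = (\<Sum>c\<in>set Lr. F1 gr1 gr2 gr3 T1 T2 c) + (\<Sum>c0\<in>set Lr. \<Sum>c1\<in>set Lr. F2 gr1 gr2 gr3 T1 T2 c0 c1)"
  proof -
    have "Sloc gl1 gl2 gl3 T1 T2 Ll = Sloc gr1 gr2 gr3 T1 T2 Lr"
      unfolding Ll_def Lr_def by (rule local_id[OF T(3) mem dist d2 l r eqb])
    then show ?thesis
      unfolding Sloc_def sum.distinct_set_conv_list[OF dLl] sum.distinct_set_conv_list[OF dLr] .
  qed
  have F3e: "(\<Sum>e\<in>E. F3 gl3 phi e) = (\<Sum>e\<in>E. F3 gr3 phi e)"
  proof (rule sum.cong[OF refl])
    fix e assume e: "e \<in> E"
    show "F3 gl3 phi e = F3 gr3 phi e"
    proof (cases "e \<in> {i1,j1,k1}")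
      case True
      then have "phi e = 0" using rot unfolding i1_def j1_def k1_def by auto
      then show ?thesis by (simp add: F3_def)
    next
      case False
      then show ?thesis using eq[OF e False e False] by (simp add: F3_def)
    qed
  qed
  have Lx: "theta0 es Xl N phi T1 T2 = (((\<Sum>c\<in>X. F1 gl1 gl2 gl3 T1 T2 c) + (\<Sum>c0\<in>X. \<Sum>c1\<in>X. F2 gl1 gl2 gl3 T1 T2 c0 c1))
      + (\<Sum>c0\<in>X. \<Sum>c1\<in>set Ll. F2 gl1 gl2 gl3 T1 T2 c0 c1) + (\<Sum>c1\<in>X. \<Sum>c0\<in>set Ll. F2 gl1 gl2 gl3 T1 T2 c0 c1)
      + ((\<Sum>c\<in>set Ll. F1 gl1 gl2 gl3 T1 T2 c) + (\<Sum>c0\<in>set Ll. \<Sum>c1\<in>set Ll. F2 gl1 gl2 gl3 T1 T2 c0 c1)))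
      + (\<Sum>e\<in>E. F3 gl3 phi e)"
    using thl unfolding XlL spl[OF finite_set] .
  have Rx: "theta0 es Xr N phi T1 T2 = (((\<Sum>c\<in>X. F1 gr1 gr2 gr3 T1 T2 c) + (\<Sum>c0\<in>X. \<Sum>c1\<in>X. F2 gr1 gr2 gr3 T1 T2 c0 c1))
      + (\<Sum>c0\<in>X. \<Sum>c1\<in>set Lr. F2 gr1 gr2 gr3 T1 T2 c0 c1) + (\<Sum>c1\<in>X. \<Sum>c0\<in>set Lr. F2 gr1 gr2 gr3 T1 T2 c0 c1)
      + ((\<Sum>c\<in>set Lr. F1 gr1 gr2 gr3 T1 T2 c) + (\<Sum>c0\<in>set Lr. \<Sum>c1\<in>set Lr. F2 gr1 gr2 gr3 T1 T2 c0 c1)))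
      + (\<Sum>e\<in>E. F3 gr3 phi e)"
    using thr unfolding XrL spr[OF finite_set] .
  show ?thesis unfolding Lx Rx A1 A2 B C D F3e ..
qed

end
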